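(* Any two exceptional bases of $\mathsf{K}_0^{\mathrm{num}}(\mathbb{P}^1\times\mathbb{P}^1)$ are related by mutations up to sign and isometry: for exceptional bases $e_\bullet,f_\bullet$ there is an isometry $\phi$ of $\mathsf{K}_0^{\mathrm{num}}(\mathbb{P}^1\times\mathbb{P}^1)$ with $\phi(\mathsf p)=\mathsf p$ such that $\phi(e_\bullet)$ and $f_\bullet$ are related by a finite sequence of mutations and sign changes.
   Context: $\mathsf{K}_0^{\mathrm{num}}(X)=\mathsf K_0(X)/\ker\chi$ with Euler pairing $\chi$; $\mathsf p=[\mathcal O_x]$ is the class of the skyscraper sheaf of a rational point. An exceptional basis is an ordered $\mathbb{Z}$-basis with upper unitriangular Gram matrix. Mutations: with $\mathsf L_e(v)=v-\chi(e,v)e$, $\mathsf R_e(v)=v-\chi(v,e)e$, $\mathsf L_{i,i+1}(e_\bullet)=(\dots,\mathsf L_{e_i}(e_{i+1}),e_i,\dots)$ and $\mathsf R_{i,i+1}(e_\bullet)=(\dots,e_{i+1},\mathsf R_{e_{i+1}}(e_i),\dots)$ (other entries unchanged). A sign change replaces some $e_i$ by $-e_i$. *)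

theory Defs
  imports "HOL-Analysis.Analysis"
begin

text \<open>Concrete model of K_0^num(P^1 x P^1): the lattice int^4 with basis
  [O], [O(1,0)], [O(0,1)], [O(1,1)] (indices 0,1,2,3), and the Euler pairing
  chi(O(a,b),O(c,d)) = (c-a+1)(d-b+1), whose Gram matrix in this basis is
  [[1,2,2,4],[0,1,0,2],[0,0,1,2],[0,0,0,1]].\<close>

type_synonym K0 = "int ^ 4"

definition zsmult :: "int \<Rightarrow> K0 \<Rightarrow> K0" where
  "zsmult c v = (\<chi> i. c * v $ i)"

definition chi :: "K0 \<Rightarrow> K0 \<Rightarrow> int" where
  "chi v w =
     v$0* w$0 + 2* v$0* w$1 + 2* v$0* w$2 + 4* v$0* w$3
   + v$1* w$1 + 2* v$1* w$3
   + v$2* w$2 + 2* v$2* w$3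
   + v$3* w$3"

text \<open>Class of the skyscraper sheaf of a point (Koszul resolution):
  p = [O] - [O(1,0)] - [O(0,1)] + [O(1,1)].\<close>
definition pt :: K0 where
  "pt = (\<chi> i. if i = 0 then 1 else if i = 1 then -1 else if i = 2 then -1 else 1)"

definition lin_comb :: "(nat \<Rightarrow> int) \<Rightarrow> K0 list \<Rightarrow> K0" where
  "lin_comb c es = (\<Sum>i<length es. zsmult (c i) (es ! i))"

definition is_Zbasis :: "K0 list \<Rightarrow> bool" where
  "is_Zbasis es \<longleftrightarrow>
     (\<forall>v. \<exists>c. v = lin_comb c es) \<and>
     (\<forall>c. lin_comb c es = 0 \<longrightarrow> (\<forall>i<length es. c i = 0))"

definition exceptional_basis :: "K0 list \<Rightarrow> bool" where
  "exceptional_basis es \<longleftrightarrow> is_Zbasis es \<and>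
     (\<forall>i<length es. chi (es!i) (es!i) = 1) \<and>
     (\<forall>i j. i < j \<and> j < length es \<longrightarrow> chi (es!j) (es!i) = 0)"

definition isometry :: "(K0 \<Rightarrow> K0) \<Rightarrow> bool" where
  "isometry \<phi> \<longleftrightarrow> bij \<phi> \<and> (\<forall>v w. \<phi> (v + w) = \<phi> v + \<phi> w) \<and>
     (\<forall>v w. chi (\<phi> v) (\<phi> w) = chi v w)"

definition Lmut :: "K0 \<Rightarrow> K0 \<Rightarrow> K0" where
  "Lmut e v = v - zsmult (chi e v) e"

definition Rmut :: "K0 \<Rightarrow> K0 \<Rightarrow> K0" where
  "Rmut e v = v - zsmult (chi v e) e"

definition Lmut_at :: "nat \<Rightarrow> K0 list \<Rightarrow> K0 list" where
  "Lmut_at i es = es[i := Lmut (es!i) (es!Suc i), Suc i := es!i]"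

definition Rmut_at :: "nat \<Rightarrow> K0 list \<Rightarrow> K0 list" where
  "Rmut_at i es = es[i := es!Suc i, Suc i := Rmut (es!Suc i) (es!i)]"

definition sign_change :: "nat \<Rightarrow> K0 list \<Rightarrow> K0 list" where
  "sign_change i es = es[i := - (es!i)]"

definition mut_step :: "K0 list \<Rightarrow> K0 list \<Rightarrow> bool" where
  "mut_step es fs \<longleftrightarrow>
     (\<exists>i. Suc i < length es \<and> (fs = Lmut_at i es \<or> fs = Rmut_at i es)) \<or>
     (\<exists>i<length es. fs = sign_change i es)"

end

theory Submission
  imports Defs
begin


lemma four_eq_zero[simp]: "(4::4) = 0" by simp

lemma vsplit: "v = (w::K0) \<longleftrightarrow> v$0 = w$0 \<and> v$1 = w$1 \<and> v$2 = w$2 \<and> v$3 = w$3"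
  by (auto simp: vec_eq_iff forall_4)

definition mk4 :: "int \<Rightarrow> int \<Rightarrow> int \<Rightarrow> int \<Rightarrow> K0" where
  "mk4 a b c d = (\<chi> i. if i = 0 then a else if i = 1 then b else if i = 2 then c else d)"

lemma mk4_comp[simp]: "mk4 a b c d $ 0 = a" "mk4 a b c d $ 1 = b" "mk4 a b c d $ 2 = c" "mk4 a b c d $ 3 = d"
  by (simp_all add: mk4_def)

lemma zsmult_comp[simp]: "zsmult c v $ i = c * v $ i" by (simp add: zsmult_def)

lemma pt_comp[simp]: "pt$0 = 1" "pt$1 = -1" "pt$2 = -1" "pt$3 = 1"
  by (simp_all add: pt_def)

lemma chi_add_left: "chi (u + v) w = chi u w + chi v w"
  by (simp add: chi_def algebra_simps)
lemma chi_add_right: "chi w (u + v) = chi w u + chi w v"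
  by (simp add: chi_def algebra_simps)
lemma chi_diff_left: "chi (u - v) w = chi u w - chi v w"
  by (simp add: chi_def algebra_simps)
lemma chi_diff_right: "chi w (u - v) = chi w u - chi w v"
  by (simp add: chi_def algebra_simps)
lemma chi_neg_left: "chi (- u) w = - chi u w"
  by (simp add: chi_def algebra_simps)
lemma chi_neg_right: "chi w (- u) = - chi w u"
  by (simp add: chi_def algebra_simps)
lemma chi_zs_left: "chi (zsmult c u) w = c * chi u w"
  by (simp add: chi_def algebra_simps)
lemma chi_zs_right: "chi w (zsmult c u) = c * chi w u"
  by (simp add: chi_def algebra_simps)
lemma chi_zero_left: "chi 0 w = 0" by (simp add: chi_def)
lemma chi_zero_right: "chi w 0 = 0" by (simp add: chi_def)

lemmas chi_lin = chi_add_left chi_add_right chi_diff_left chi_diff_right chi_neg_left chi_neg_right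
  chi_zs_left chi_zs_right chi_zero_left chi_zero_right

definition rk :: "K0 \<Rightarrow> int" where "rk v = v$0 + v$1 + v$2 + v$3"
definition sl :: "K0 \<Rightarrow> int" where "sl v = v$1 + v$2 + 2 * v$3"
definition dt :: "K0 \<Rightarrow> K0 \<Rightarrow> int" where "dt u v = rk u * sl v - rk v * sl u"

lemma rk_lin: "rk (u + v) = rk u + rk v" "rk (u - v) = rk u - rk v" "rk (- u) = - rk u"
  "rk (zsmult c u) = c * rk u" "rk 0 = 0"
  by (simp_all add: rk_def algebra_simps)
lemma sl_lin: "sl (u + v) = sl u + sl v" "sl (u - v) = sl u - sl v" "sl (- u) = - sl u"
  "sl (zsmult c u) = c * sl u" "sl 0 = 0"
  by (simp_all add: sl_def algebra_simps)

lemma chi_antisym: "chi u v - chi v u = 2 * dt u v"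
  by (simp add: chi_def dt_def rk_def sl_def algebra_simps)

lemma chi_pt_left: "chi pt v = rk v" by (simp add: chi_def rk_def)
lemma chi_pt_right: "chi v pt = rk v" by (simp add: chi_def rk_def)

lemma chi_self_odd: assumes "chi v v = 1" shows "odd (rk v)"
proof -
  have "chi v v = v$0 * v$0 + v$1 * v$1 + v$2 * v$2 + v$3 * v$3 + 2*(v$0 * v$1 + v$0 * v$2 + 2*(v$0 * v$3) + v$1 * v$3 + v$2 * v$3)"
    by (simp add: chi_def algebra_simps)
  then have "v$0 * v$0 + v$1 * v$1 + v$2 * v$2 + v$3 * v$3 = 1 - 2*(v$0 * v$1 + v$0 * v$2 + 2*(v$0 * v$3) + v$1 * v$3 + v$2 * v$3)"
    using assms by linarith
  then have "odd (v$0 * v$0 + v$1 * v$1 + v$2 * v$2 + v$3 * v$3)" by simp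
  then show ?thesis by (simp add: rk_def)
qed


definition R :: "K0 \<Rightarrow> real^4" where "R v = (\<chi> i. real_of_int (v$i))"

definition chiR :: "real^4 \<Rightarrow> real^4 \<Rightarrow> real" where
  "chiR v w =
     v$0* w$0 + 2* v$0* w$1 + 2* v$0* w$2 + 4* v$0* w$3
   + v$1* w$1 + 2* v$1* w$3
   + v$2* w$2 + 2* v$2* w$3
   + v$3* w$3"

lemma chiR_R: "chiR (R u) (R v) = real_of_int (chi u v)"
  by (simp add: chiR_def chi_def R_def)

lemma R_inj: "R u = R v \<Longrightarrow> u = v"
  by (simp add: R_def vec_eq_iff)

lemma chiR_sum: "chiR (\<Sum>i<(n::nat). c i *\<^sub>R x i) y = (\<Sum>i<n. c i * chiR (x i) y)"
  by (induction n) (simp_all add: chiR_def algebra_simps)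

lemma R_zsmult: "R (zsmult c v) = real_of_int c *\<^sub>R R v"
  by (simp add: R_def vec_eq_iff)
lemma R_add: "R (u + v) = R u + R v"
  by (simp add: R_def vec_eq_iff)

lemma R_lin_comb: "R (lin_comb c es) = (\<Sum>i<length es. real_of_int (c i) *\<^sub>R R (es!i))"
proof -
  have "R (\<Sum>i<n. zsmult (c i) (es ! i)) = (\<Sum>i<n. real_of_int (c i) *\<^sub>R R (es!i))" for n
    by (induction n) (simp_all add: R_add R_zsmult R_def vec_eq_iff)
  then show ?thesis by (simp add: lin_comb_def)
qed

lemma exc_distinct:
  assumes "exceptional_basis es" shows "distinct es"
proof -
  { fix i j assume ij: "i < j" "j < length es" "es!i = es!j"
    have "chi (es!j) (es!i) = 0" using assms ij unfolding exceptional_basis_def by blast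
    moreover have "chi (es!j) (es!j) = 1" using assms ij unfolding exceptional_basis_def by blast
    ultimately have False using ij by simp }
  then show ?thesis by (metis distinct_conv_nth linorder_neqE_nat)
qed

lemma exc_indep:
  assumes ex: "exceptional_basis es"
  shows "independent (R ` set es)"
proof -
  let ?V = "R ` set es"
  have fin: "finite ?V" by simp
  have dist: "distinct es" using ex exc_distinct by blast
  have injR: "inj_on (\<lambda>i. R (es!i)) {..<length es}"
    using dist R_inj by (auto simp: inj_on_def distinct_conv_nth)
  have Veq: "?V = (\<lambda>i. R (es!i)) ` {..<length es}"
    by (auto simp: set_conv_nth image_iff)
  { fix u assume u0: "(\<Sum>v\<in>?V. u v *\<^sub>R v) = 0"
    let ?c = "\<lambda>i. u (R (es!i))"
    have s0: "(\<Sum>i<length es. ?c i *\<^sub>R R (es!i)) = 0"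
      using u0 by (simp add: Veq sum.reindex[OF injR])
    have "\<forall>i<j. i < length es \<longrightarrow> ?c i = 0" for j
    proof (induction j)
      case 0 then show ?case by simp
    next
      case (Suc j)
      show ?case
      proof (intro allI impI)
        fix i assume "i < Suc j" "i < length es"
        show "?c i = 0"
        proof (cases "i < j")
          case True with Suc show ?thesis using \<open>i < length es\<close> by blast
        next
          case False
          then have ij: "i = j" using \<open>i < Suc j\<close> by simp
          have "0 = chiR (\<Sum>k<length es. ?c k *\<^sub>R R (es!k)) (R (es!j))" using s0 by (simp add: chiR_def)
          also have "\<dots> = (\<Sum>k<length es. ?c k * real_of_int (chi (es!k) (es!j)))"
            by (simp add: chiR_sum chiR_R)
          also have "\<dots> = (\<Sum>k\<in>{j}. ?c k * real_of_int (chi (es!k) (es!j)))"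
          proof (rule sum.mono_neutral_right)
            show "finite {..<length es}" by simp
            show "{j} \<subseteq> {..<length es}" using ij \<open>i < length es\<close> by simp
            show "\<forall>k\<in>{..<length es} - {j}. ?c k * real_of_int (chi (es!k) (es!j)) = 0"
            proof
              fix k assume k: "k \<in> {..<length es} - {j}"
              show "?c k * real_of_int (chi (es!k) (es!j)) = 0"
              proof (cases "k < j")
                case True then show ?thesis using Suc ij \<open>i < length es\<close> k by auto
              next
                case False
                then have "j < k" using k by auto
                then have "chi (es!k) (es!j) = 0" using ex k by (auto simp: exceptional_basis_def)
                then show ?thesis by simp
              qed
            qed
          qed
          also have "\<dots> = ?c j" using ex ij \<open>i < length es\<close> by (simp add: exceptional_basis_def)
          finally show ?thesis using ij by simp
        qed
      qed
    qed
    then have "\<forall>v\<in>?V. u v = 0" by (auto simp: set_conv_nth)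
  }
  then show ?thesis using fin by (auto simp: real_vector.dependent_finite)
qed

lemma exc_length:
  assumes ex: "exceptional_basis es" shows "length es = 4"
proof -
  let ?V = "R ` set es"
  have dist: "distinct es" using ex exc_distinct by blast
  have cardV: "card ?V = length es"
    using dist R_inj by (simp add: card_image inj_on_def distinct_card)
  have "card ?V \<le> DIM(real^4)" using exc_indep[OF ex] independent_bound by blast
  then have le: "length es \<le> 4" using cardV by simp
  define un :: "4 \<Rightarrow> K0" where "un k = (\<chi> i. if i = k then 1 else 0)" for k
  have un_sp: "R (un k) \<in> span ?V" for k
  proof -
    obtain c where "un k = lin_comb c es" using ex unfolding exceptional_basis_def is_Zbasis_def by blast
    then have "R (un k) = (\<Sum>i<length es. real_of_int (c i) *\<^sub>R R (es!i))" by (simp add: R_lin_comb)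
    also have "\<dots> \<in> span ?V"
      by (intro span_sum span_scale span_base) (auto simp: set_conv_nth)
    finally show ?thesis .
  qed
  have "UNIV \<subseteq> span ?V"
  proof
    fix x :: "real^4"
    have "x = (\<Sum>k\<in>UNIV. x$k *\<^sub>R R (un k))"
      by (simp add: vec_eq_iff R_def un_def sum_4 forall_4)
    also have "\<dots> \<in> span ?V" by (intro span_sum span_scale un_sp)
    finally show "x \<in> span ?V" .
  qed
  then have "dim (UNIV::(real^4) set) \<le> card ?V" using span_card_ge_dim[of ?V UNIV] by simp
  then have "4 \<le> length es" using cardV by simp
  with le show ?thesis by simp
qed


definition gram4 :: "K0 \<Rightarrow> K0 \<Rightarrow> K0 \<Rightarrow> K0 \<Rightarrow> bool" where
  "gram4 a b c d \<longleftrightarrow> chi a a = 1 \<and> chi b b = 1 \<and> chi c c = 1 \<and> chi d d = 1 \<and>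
     chi b a = 0 \<and> chi c a = 0 \<and> chi d a = 0 \<and> chi c b = 0 \<and> chi d b = 0 \<and> chi d c = 0"

definition lc4 :: "int \<Rightarrow> int \<Rightarrow> int \<Rightarrow> int \<Rightarrow> K0 \<Rightarrow> K0 \<Rightarrow> K0 \<Rightarrow> K0 \<Rightarrow> K0" where
  "lc4 k0 k1 k2 k3 a b c d = zsmult k0 a + zsmult k1 b + zsmult k2 c + zsmult k3 d"

definition span4 :: "K0 \<Rightarrow> K0 \<Rightarrow> K0 \<Rightarrow> K0 \<Rightarrow> bool" where
  "span4 a b c d \<longleftrightarrow> (\<forall>v. \<exists>k0 k1 k2 k3. v = lc4 k0 k1 k2 k3 a b c d)"

definition exc4 :: "K0 \<Rightarrow> K0 \<Rightarrow> K0 \<Rightarrow> K0 \<Rightarrow> bool" where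
  "exc4 a b c d \<longleftrightarrow> gram4 a b c d \<and> span4 a b c d"

lemma lin_comb4: "lin_comb k [a,b,c,d] = lc4 (k 0) (k 1) (k 2) (k 3) a b c d"
  by (simp add: lin_comb_def lc4_def numeral_eq_Suc lessThan_Suc add.assoc)

lemma all_less4: "(\<forall>i<(4::nat). P i) \<longleftrightarrow> P 0 \<and> P 1 \<and> P 2 \<and> P 3"
  by (auto simp: numeral_eq_Suc less_Suc_eq)

lemma indep4:
  assumes g: "gram4 a b c d" and z: "lc4 k0 k1 k2 k3 a b c d = 0"
  shows "k0 = 0 \<and> k1 = 0 \<and> k2 = 0 \<and> k3 = 0"
proof -
  have e: "chi (lc4 k0 k1 k2 k3 a b c d) x = 0" for x using z by (simp add: chi_zero_left)
  have "k0 = 0" using e[of a] g by (simp add: lc4_def chi_lin gram4_def)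
  moreover have "k1 = 0" using e[of b] g \<open>k0 = 0\<close> by (simp add: lc4_def chi_lin gram4_def)
  moreover have "k2 = 0" using e[of c] g \<open>k0 = 0\<close> \<open>k1 = 0\<close> by (simp add: lc4_def chi_lin gram4_def)
  moreover have "k3 = 0" using e[of d] g \<open>k0 = 0\<close> \<open>k1 = 0\<close> \<open>k2 = 0\<close> by (simp add: lc4_def chi_lin gram4_def)
  ultimately show ?thesis by simp
qed

lemma exc_iff: "exceptional_basis [a,b,c,d] \<longleftrightarrow> exc4 a b c d"
proof
  assume ex: "exceptional_basis [a,b,c,d]"
  have diag: "\<forall>i<4. chi ([a,b,c,d]!i) ([a,b,c,d]!i) = 1" using ex by (simp add: exceptional_basis_def)
  have off: "\<And>i j. i < j \<Longrightarrow> j < 4 \<Longrightarrow> chi ([a,b,c,d]!j) ([a,b,c,d]!i) = 0"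
    using ex by (simp add: exceptional_basis_def)
  have "gram4 a b c d"
    using diag off[of 0 1] off[of 0 2] off[of 0 3] off[of 1 2] off[of 1 3] off[of 2 3]
    by (simp add: gram4_def all_less4)
  moreover have "span4 a b c d"
  proof (unfold span4_def, intro allI)
    fix v
    obtain k where "v = lin_comb k [a,b,c,d]" using ex unfolding exceptional_basis_def is_Zbasis_def by blast
    then show "\<exists>k0 k1 k2 k3. v = lc4 k0 k1 k2 k3 a b c d" by (auto simp: lin_comb4)
  qed
  ultimately show "exc4 a b c d" by (simp add: exc4_def)
next
  assume ex: "exc4 a b c d"
  then have g: "gram4 a b c d" and sp: "span4 a b c d" by (auto simp: exc4_def)
  have "is_Zbasis [a,b,c,d]"
  proof (unfold is_Zbasis_def, intro conjI allI impI)
    fix v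
    obtain k0 k1 k2 k3 where "v = lc4 k0 k1 k2 k3 a b c d" using sp unfolding span4_def by blast
    then have "v = lin_comb (\<lambda>i. if i = 0 then k0 else if i = 1 then k1 else if i = 2 then k2 else k3) [a,b,c,d]"
      by (simp add: lin_comb4)
    then show "\<exists>k. v = lin_comb k [a,b,c,d]" by blast
  next
    fix k i assume "lin_comb k [a,b,c,d] = 0" "i < length [a,b,c,d]"
    then show "k i = 0" using indep4[OF g, of "k 0" "k 1" "k 2" "k 3"]
      by (auto simp: lin_comb4 numeral_eq_Suc less_Suc_eq)
  qed
  moreover have "\<forall>i<length [a,b,c,d]. chi ([a,b,c,d]!i) ([a,b,c,d]!i) = 1"
    using g by (auto simp: gram4_def numeral_eq_Suc less_Suc_eq)
  moreover have "\<forall>i j. i < j \<and> j < length [a,b,c,d] \<longrightarrow> chi ([a,b,c,d]!j) ([a,b,c,d]!i) = 0"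
    using g by (auto simp: gram4_def numeral_eq_Suc less_Suc_eq)
  ultimately show "exceptional_basis [a,b,c,d]" by (simp add: exceptional_basis_def)
qed

lemma exc_4: assumes "exceptional_basis es" obtains a b c d where "es = [a,b,c,d]" "exc4 a b c d"
proof -
  have "length es = 4" using exc_length[OF assms] .
  then obtain a b c d where "es = [a,b,c,d]" by (auto simp: numeral_eq_Suc length_Suc_conv)
  with assms exc_iff that show ?thesis by blast
qed


definition insp4 :: "K0 \<Rightarrow> K0 \<Rightarrow> K0 \<Rightarrow> K0 \<Rightarrow> K0 \<Rightarrow> bool" where
  "insp4 x a b c d \<longleftrightarrow> (\<exists>k0 k1 k2 k3. x = lc4 k0 k1 k2 k3 a b c d)"

lemma span4_insp: "span4 a b c d \<longleftrightarrow> (\<forall>v. insp4 v a b c d)"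
  by (simp add: span4_def insp4_def)

lemma insp_add: assumes "insp4 x a b c d" "insp4 y a b c d" shows "insp4 (x + y) a b c d"
proof -
  obtain k0 k1 k2 k3 where x: "x = lc4 k0 k1 k2 k3 a b c d" using assms(1) unfolding insp4_def by blast
  obtain m0 m1 m2 m3 where y: "y = lc4 m0 m1 m2 m3 a b c d" using assms(2) unfolding insp4_def by blast
  have "x + y = lc4 (k0+m0) (k1+m1) (k2+m2) (k3+m3) a b c d" using x y by (simp add: lc4_def vsplit algebra_simps)
  then show ?thesis unfolding insp4_def by blast
qed

lemma insp_zs: assumes "insp4 x a b c d" shows "insp4 (zsmult k x) a b c d"
proof -
  obtain k0 k1 k2 k3 where x: "x = lc4 k0 k1 k2 k3 a b c d" using assms(1) unfolding insp4_def by blast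
  have "zsmult k x = lc4 (k*k0) (k*k1) (k*k2) (k*k3) a b c d" using x by (simp add: lc4_def vsplit algebra_simps)
  then show ?thesis unfolding insp4_def by blast
qed

lemma zs_neg: "- x = zsmult (-1) (x::K0)" by (simp add: vsplit)
lemma zs_diff: "x - y = x + zsmult (-1) (y::K0)" by (simp add: vsplit)

lemma insp_neg: "insp4 x a b c d \<Longrightarrow> insp4 (- x) a b c d"
  by (simp add: zs_neg insp_zs)
lemma insp_diff: "insp4 x a b c d \<Longrightarrow> insp4 y a b c d \<Longrightarrow> insp4 (x - y) a b c d"
  by (simp add: zs_diff insp_zs insp_add)

lemma insp_base: "insp4 a a b c d" "insp4 b a b c d" "insp4 c a b c d" "insp4 d a b c d"
  unfolding insp4_def
  by (rule exI[of _ 1], rule exI[of _ 0], rule exI[of _ 0], rule exI[of _ 0], simp add: lc4_def vsplit)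
     (rule exI[of _ 0], rule exI[of _ 1], rule exI[of _ 0], rule exI[of _ 0], simp add: lc4_def vsplit,
      rule exI[of _ 0], rule exI[of _ 0], rule exI[of _ 1], rule exI[of _ 0], simp add: lc4_def vsplit,
      rule exI[of _ 0], rule exI[of _ 0], rule exI[of _ 0], rule exI[of _ 1], simp add: lc4_def vsplit)

lemma insp_lc4: "insp4 a a' b' c' d' \<Longrightarrow> insp4 b a' b' c' d' \<Longrightarrow> insp4 c a' b' c' d' \<Longrightarrow> insp4 d a' b' c' d'
   \<Longrightarrow> insp4 (lc4 k0 k1 k2 k3 a b c d) a' b' c' d'"
  unfolding lc4_def by (intro insp_add insp_zs)

lemma span4_trans:
  assumes "span4 a b c d" "insp4 a a' b' c' d'" "insp4 b a' b' c' d'" "insp4 c a' b' c' d'" "insp4 d a' b' c' d'"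
  shows "span4 a' b' c' d'"
  unfolding span4_insp
proof
  fix v
  obtain k0 k1 k2 k3 where "v = lc4 k0 k1 k2 k3 a b c d" using assms(1) unfolding span4_def by blast
  then show "insp4 v a' b' c' d'" using insp_lc4 assms(2-5) by simp
qed

lemmas insp_intros = insp_add insp_zs insp_neg insp_diff insp_base

lemma exc_L0: assumes "exc4 a b c d" shows "exc4 (Lmut a b) a c d"
proof -
  from assms have g: "gram4 a b c d" and s: "span4 a b c d" by (auto simp: exc4_def)
  have "gram4 (Lmut a b) a c d" using g by (simp add: gram4_def Lmut_def chi_lin algebra_simps)
  moreover have hb: "insp4 b (Lmut a b) a c d"
    by (rule subst[of "Lmut a b + zsmult (chi a b) a"]) (simp add: Lmut_def, metis insp_intros)
  then have "span4 (Lmut a b) a c d" by (rule span4_trans[OF s insp_base(2) _ insp_base(3) insp_base(4)])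
  ultimately show ?thesis by (simp add: exc4_def)
qed

lemma exc_L1: assumes "exc4 a b c d" shows "exc4 a (Lmut b c) b d"
proof -
  from assms have g: "gram4 a b c d" and s: "span4 a b c d" by (auto simp: exc4_def)
  have "gram4 a (Lmut b c) b d" using g by (simp add: gram4_def Lmut_def Rmut_def chi_lin algebra_simps)
  moreover have hb: "insp4 c a (Lmut b c) b d"
    by (rule subst[of "Lmut b c + zsmult (chi b c) b"]) (simp add: Lmut_def vsplit, metis insp_intros)
  then have "span4 a (Lmut b c) b d" by (rule span4_trans[OF s insp_base(1) insp_base(3) _ insp_base(4)])
  ultimately show ?thesis by (simp add: exc4_def)
qed

lemma exc_L2: assumes "exc4 a b c d" shows "exc4 a b (Lmut c d) c"
proof -
  from assms have g: "gram4 a b c d" and s: "span4 a b c d" by (auto simp: exc4_def)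
  have "gram4 a b (Lmut c d) c" using g by (simp add: gram4_def Lmut_def Rmut_def chi_lin algebra_simps)
  moreover have hb: "insp4 d a b (Lmut c d) c"
    by (rule subst[of "Lmut c d + zsmult (chi c d) c"]) (simp add: Lmut_def vsplit, metis insp_intros)
  then have "span4 a b (Lmut c d) c" by (rule span4_trans[OF s insp_base(1) insp_base(2) insp_base(4) _])
  ultimately show ?thesis by (simp add: exc4_def)
qed

lemma exc_R0: assumes "exc4 a b c d" shows "exc4 b (Rmut b a) c d"
proof -
  from assms have g: "gram4 a b c d" and s: "span4 a b c d" by (auto simp: exc4_def)
  have "gram4 b (Rmut b a) c d" using g by (simp add: gram4_def Lmut_def Rmut_def chi_lin algebra_simps)
  moreover have hb: "insp4 a b (Rmut b a) c d"
    by (rule subst[of "Rmut b a + zsmult (chi a b) b"]) (simp add: Rmut_def vsplit, metis insp_intros)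
  then have "span4 b (Rmut b a) c d" by (rule span4_trans[OF s _ insp_base(1) insp_base(3) insp_base(4)])
  ultimately show ?thesis by (simp add: exc4_def)
qed

lemma exc_R1: assumes "exc4 a b c d" shows "exc4 a c (Rmut c b) d"
proof -
  from assms have g: "gram4 a b c d" and s: "span4 a b c d" by (auto simp: exc4_def)
  have "gram4 a c (Rmut c b) d" using g by (simp add: gram4_def Lmut_def Rmut_def chi_lin algebra_simps)
  moreover have hb: "insp4 b a c (Rmut c b) d"
    by (rule subst[of "Rmut c b + zsmult (chi b c) c"]) (simp add: Rmut_def vsplit, metis insp_intros)
  then have "span4 a c (Rmut c b) d" by (rule span4_trans[OF s insp_base(1) _ insp_base(2) insp_base(4)])
  ultimately show ?thesis by (simp add: exc4_def)
qed

lemma exc_R2: assumes "exc4 a b c d" shows "exc4 a b d (Rmut d c)"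
proof -
  from assms have g: "gram4 a b c d" and s: "span4 a b c d" by (auto simp: exc4_def)
  have "gram4 a b d (Rmut d c)" using g by (simp add: gram4_def Lmut_def Rmut_def chi_lin algebra_simps)
  moreover have hb: "insp4 c a b d (Rmut d c)"
    by (rule subst[of "Rmut d c + zsmult (chi c d) d"]) (simp add: Rmut_def vsplit, metis insp_intros)
  then have "span4 a b d (Rmut d c)" by (rule span4_trans[OF s insp_base(1) insp_base(2) _ insp_base(3)])
  ultimately show ?thesis by (simp add: exc4_def)
qed

lemma exc_S0: assumes "exc4 a b c d" shows "exc4 (- a) b c d"
proof -
  from assms have g: "gram4 a b c d" and s: "span4 a b c d" by (auto simp: exc4_def)
  have "gram4 (- a) b c d" using g by (simp add: gram4_def Lmut_def Rmut_def chi_lin algebra_simps)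
  moreover have hb: "insp4 a (- a) b c d"
    by (rule subst[of "- (- a)"]) (simp add: Rmut_def vsplit, metis insp_intros)
  then have "span4 (- a) b c d" by (rule span4_trans[OF s _ insp_base(2) insp_base(3) insp_base(4)])
  ultimately show ?thesis by (simp add: exc4_def)
qed

lemma exc_S1: assumes "exc4 a b c d" shows "exc4 a (- b) c d"
proof -
  from assms have g: "gram4 a b c d" and s: "span4 a b c d" by (auto simp: exc4_def)
  have "gram4 a (- b) c d" using g by (simp add: gram4_def Lmut_def Rmut_def chi_lin algebra_simps)
  moreover have hb: "insp4 b a (- b) c d"
    by (rule subst[of "- (- b)"]) (simp add: Rmut_def vsplit, metis insp_intros)
  then have "span4 a (- b) c d" by (rule span4_trans[OF s insp_base(1) _ insp_base(3) insp_base(4)])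
  ultimately show ?thesis by (simp add: exc4_def)
qed

lemma exc_S2: assumes "exc4 a b c d" shows "exc4 a b (- c) d"
proof -
  from assms have g: "gram4 a b c d" and s: "span4 a b c d" by (auto simp: exc4_def)
  have "gram4 a b (- c) d" using g by (simp add: gram4_def Lmut_def Rmut_def chi_lin algebra_simps)
  moreover have hb: "insp4 c a b (- c) d"
    by (rule subst[of "- (- c)"]) (simp add: Rmut_def vsplit, metis insp_intros)
  then have "span4 a b (- c) d" by (rule span4_trans[OF s insp_base(1) insp_base(2) _ insp_base(4)])
  ultimately show ?thesis by (simp add: exc4_def)
qed

lemma exc_S3: assumes "exc4 a b c d" shows "exc4 a b c (- d)"
proof -
  from assms have g: "gram4 a b c d" and s: "span4 a b c d" by (auto simp: exc4_def)
  have "gram4 a b c (- d)" using g by (simp add: gram4_def Lmut_def Rmut_def chi_lin algebra_simps)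
  moreover have hb: "insp4 d a b c (- d)"
    by (rule subst[of "- (- d)"]) (simp add: Rmut_def vsplit, metis insp_intros)
  then have "span4 a b c (- d)" by (rule span4_trans[OF s insp_base(1) insp_base(2) insp_base(3) _])
  ultimately show ?thesis by (simp add: exc4_def)
qed


lemma less4_cases: "(i::nat) < 4 \<Longrightarrow> i = 0 \<or> i = 1 \<or> i = 2 \<or> i = 3" by auto

lemma step_explicit:
  "mut_step [a,b,c,d] fs \<longleftrightarrow>
    fs = [Lmut a b, a, c, d] \<or> fs = [a, Lmut b c, b, d] \<or> fs = [a, b, Lmut c d, c] \<or>
    fs = [b, Rmut b a, c, d] \<or> fs = [a, c, Rmut c b, d] \<or> fs = [a, b, d, Rmut d c] \<or>
    fs = [-a, b, c, d] \<or> fs = [a, -b, c, d] \<or> fs = [a, b, -c, d] \<or> fs = [a, b, c, -d]"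
proof
  assume "mut_step [a,b,c,d] fs"
  then have "(\<exists>i. Suc i < 4 \<and> (fs = Lmut_at i [a,b,c,d] \<or> fs = Rmut_at i [a,b,c,d])) \<or>
     (\<exists>i<4. fs = sign_change i [a,b,c,d])" unfolding mut_step_def by (simp add: numeral_eq_Suc)
  then consider (LR) i where "Suc i < 4" "fs = Lmut_at i [a,b,c,d] \<or> fs = Rmut_at i [a,b,c,d]"
    | (S) i where "i < 4" "fs = sign_change i [a,b,c,d]"
    by blast
  then show "fs = [Lmut a b, a, c, d] \<or> fs = [a, Lmut b c, b, d] \<or> fs = [a, b, Lmut c d, c] \<or>
    fs = [b, Rmut b a, c, d] \<or> fs = [a, c, Rmut c b, d] \<or> fs = [a, b, d, Rmut d c] \<or>
    fs = [-a, b, c, d] \<or> fs = [a, -b, c, d] \<or> fs = [a, b, -c, d] \<or> fs = [a, b, c, -d]"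
  proof cases
    case LR
    then have "i = 0 \<or> i = 1 \<or> i = 2" by auto
    then show ?thesis using LR(2) by (auto simp: Lmut_at_def Rmut_at_def)
  next
    case S
    then have "i = 0 \<or> i = 1 \<or> i = 2 \<or> i = 3" by auto
    then show ?thesis using S(2) by (auto simp: sign_change_def)
  qed
next
  assume h: "fs = [Lmut a b, a, c, d] \<or> fs = [a, Lmut b c, b, d] \<or> fs = [a, b, Lmut c d, c] \<or>
    fs = [b, Rmut b a, c, d] \<or> fs = [a, c, Rmut c b, d] \<or> fs = [a, b, d, Rmut d c] \<or>
    fs = [-a, b, c, d] \<or> fs = [a, -b, c, d] \<or> fs = [a, b, -c, d] \<or> fs = [a, b, c, -d]"
  have L: "mut_step [a,b,c,d] (Lmut_at i [a,b,c,d])" if "i < 3" for i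
    unfolding mut_step_def using that by (simp add: numeral_eq_Suc; blast)
  have Rr: "mut_step [a,b,c,d] (Rmut_at i [a,b,c,d])" if "i < 3" for i
    unfolding mut_step_def using that by (simp add: numeral_eq_Suc; blast)
  have Sg: "mut_step [a,b,c,d] (sign_change i [a,b,c,d])" if "i < 4" for i
    unfolding mut_step_def using that by (simp add: numeral_eq_Suc; blast)
  from h show "mut_step [a,b,c,d] fs"
    using L[of 0] L[of 1] L[of 2] Rr[of 0] Rr[of 1] Rr[of 2] Sg[of 0] Sg[of 1] Sg[of 2] Sg[of 3]
    by (auto simp: Lmut_at_def Rmut_at_def sign_change_def)
qed

lemma step_exc:
  assumes "exceptional_basis es" "mut_step es fs" shows "exceptional_basis fs"
proof -
  obtain a b c d where es: "es = [a,b,c,d]" and e: "exc4 a b c d" using exc_4[OF assms(1)] by blast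
  show ?thesis using assms(2) unfolding es step_explicit
    using exc_L0[OF e] exc_L1[OF e] exc_L2[OF e] exc_R0[OF e] exc_R1[OF e] exc_R2[OF e]
      exc_S0[OF e] exc_S1[OF e] exc_S2[OF e] exc_S3[OF e]
    by (auto simp: exc_iff)
qed

lemma steps_exc:
  assumes "mut_step\<^sup>*\<^sup>* es fs" "exceptional_basis es" shows "exceptional_basis fs"
  using assms by (induction rule: rtranclp_induct) (auto intro: step_exc)

lemma step_rev:
  assumes "exceptional_basis es" "mut_step es fs" shows "mut_step fs es"
proof -
  obtain a b c d where es: "es = [a,b,c,d]" and e: "exc4 a b c d" using exc_4[OF assms(1)] by blast
  then have g: "gram4 a b c d" by (simp add: exc4_def)
  have i1: "Rmut a (Lmut a b) = b" "Rmut b (Lmut b c) = c" "Rmut c (Lmut c d) = d"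
    using g by (simp_all add: Rmut_def Lmut_def gram4_def chi_lin vsplit algebra_simps)
  have i2: "Lmut b (Rmut b a) = a" "Lmut c (Rmut c b) = b" "Lmut d (Rmut d c) = c"
    using g by (simp_all add: Rmut_def Lmut_def gram4_def chi_lin vsplit algebra_simps)
  show ?thesis using assms(2) unfolding es step_explicit
    by (elim disjE) (simp_all add: step_explicit i1 i2)
qed

lemma steps_rev:
  assumes "mut_step\<^sup>*\<^sup>* es fs" "exceptional_basis es" shows "mut_step\<^sup>*\<^sup>* fs es"
  using assms
proof (induction rule: rtranclp_induct)
  case base then show ?case by simp
next
  case (step y z)
  have "exceptional_basis y" using steps_exc step.hyps(1) step.prems by blast
  then have "mut_step z y" using step_rev step.hyps(2) by blast
  then show ?case using step.IH step.prems by (meson converse_rtranclp_into_rtranclp)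
qed


lemma iso_add: "isometry \<phi> \<Longrightarrow> \<phi> (u + v) = \<phi> u + \<phi> v" by (simp add: isometry_def)
lemma iso_chi: "isometry \<phi> \<Longrightarrow> chi (\<phi> u) (\<phi> v) = chi u v" by (simp add: isometry_def)
lemma iso_zero: assumes "isometry \<phi>" shows "\<phi> 0 = 0"
proof -
  have "\<phi> (0 + 0) = \<phi> 0 + \<phi> 0" using iso_add[OF assms] .
  then show ?thesis by simp
qed
lemma iso_neg: assumes "isometry \<phi>" shows "\<phi> (- v) = - \<phi> v"
proof -
  have "\<phi> (v + - v) = \<phi> v + \<phi> (- v)" using iso_add[OF assms] .
  then have "0 = \<phi> v + \<phi> (- v)" using iso_zero[OF assms] by simp
  then show ?thesis by (simp add: eq_neg_iff_add_eq_0 add.commute)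
qed
lemma iso_diff: assumes "isometry \<phi>" shows "\<phi> (u - v) = \<phi> u - \<phi> v"
  using iso_add[OF assms, of u "- v"] iso_neg[OF assms, of v] by simp
lemma iso_zs: assumes "isometry \<phi>" shows "\<phi> (zsmult k v) = zsmult k (\<phi> v)"
proof -
  have nat: "\<phi> (zsmult (int n) v) = zsmult (int n) (\<phi> v)" for n
  proof (induction n)
    case 0
    have "zsmult 0 v = 0" "zsmult 0 (\<phi> v) = 0" by (simp_all add: vec_eq_iff)
    then show ?case using iso_zero[OF assms] by simp
  next
    case (Suc n)
    have "zsmult (int (Suc n)) v = zsmult (int n) v + v" by (simp add: vec_eq_iff algebra_simps)
    then have "\<phi> (zsmult (int (Suc n)) v) = zsmult (int n) (\<phi> v) + \<phi> v"
      using Suc iso_add[OF assms] by simp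
    also have "\<dots> = zsmult (int (Suc n)) (\<phi> v)" by (simp add: vec_eq_iff algebra_simps)
    finally show ?case .
  qed
  show ?thesis
  proof (cases "k \<ge> 0")
    case True then show ?thesis using nat[of "nat k"] by simp
  next
    case False
    then have "zsmult k v = - zsmult (int (nat (- k))) v" by (simp add: vec_eq_iff)
    moreover have "zsmult k (\<phi> v) = - zsmult (int (nat (- k))) (\<phi> v)" using False by (simp add: vec_eq_iff)
    moreover have "\<phi> (zsmult (int (nat (- k))) v) = zsmult (int (nat (- k))) (\<phi> v)" by (rule nat)
    ultimately show ?thesis using iso_neg[OF assms] by metis
  qed
qed

lemma iso_Lmut: "isometry \<phi> \<Longrightarrow> \<phi> (Lmut e v) = Lmut (\<phi> e) (\<phi> v)"
  by (simp add: Lmut_def iso_diff iso_zs iso_chi)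
lemma iso_Rmut: "isometry \<phi> \<Longrightarrow> \<phi> (Rmut e v) = Rmut (\<phi> e) (\<phi> v)"
  by (simp add: Rmut_def iso_diff iso_zs iso_chi)

lemma map_step: assumes "isometry \<phi>" "mut_step x y" shows "mut_step (map \<phi> x) (map \<phi> y)"
proof -
  have L: "map \<phi> (Lmut_at i x) = Lmut_at i (map \<phi> x)" if "Suc i < length x" for i
    using that by (simp add: Lmut_at_def map_update iso_Lmut[OF assms(1)])
  have R: "map \<phi> (Rmut_at i x) = Rmut_at i (map \<phi> x)" if "Suc i < length x" for i
    using that by (simp add: Rmut_at_def map_update iso_Rmut[OF assms(1)])
  have S: "map \<phi> (sign_change i x) = sign_change i (map \<phi> x)" if "i < length x" for i
    using that by (simp add: sign_change_def map_update iso_neg[OF assms(1)])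
  show ?thesis using assms(2) L R S unfolding mut_step_def by auto
qed

lemma map_steps: assumes "isometry \<phi>" "mut_step\<^sup>*\<^sup>* x y" shows "mut_step\<^sup>*\<^sup>* (map \<phi> x) (map \<phi> y)"
  using assms(2) by (induction rule: rtranclp_induct) (auto intro: map_step[OF assms(1)] rtranclp.rtrancl_into_rtrancl)

lemma iso_uminus: "isometry uminus"
  unfolding isometry_def by (auto simp: chi_lin intro: o_bij[of uminus])

lemma negall_steps: "mut_step\<^sup>*\<^sup>* (map uminus [a,b,c,d]) [a,b,c,d]"
proof -
  have "mut_step [-a,-b,-c,-d] [a,-b,-c,-d]" using step_explicit[of "-a"] by simp
  moreover have "mut_step [a,-b,-c,-d] [a,b,-c,-d]" using step_explicit[of a "-b"] by simp
  moreover have "mut_step [a,b,-c,-d] [a,b,c,-d]" using step_explicit[of a b "-c"] by simp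
  moreover have "mut_step [a,b,c,-d] [a,b,c,d]" using step_explicit[of a b c "-d"] by simp
  ultimately show ?thesis by (simp add: converse_rtranclp_into_rtranclp)
qed


definition sig :: "K0 \<Rightarrow> K0 \<Rightarrow> K0" where "sig e x = x - zsmult (chi e x - chi x e) e"

definition kap :: "K0 \<Rightarrow> K0" where
  "kap x = mk4 (9*x$0 + 6*x$1 + 6*x$2 + 4*x$3) (-6*x$0 - 3*x$1 - 4*x$2 - 2*x$3)
              (-6*x$0 - 4*x$1 - 3*x$2 - 2*x$3) (4*x$0 + 2*x$1 + 2*x$2 + x$3)"

lemma kap_chi: "chi v (kap x) = chi x v"
  by (simp add: kap_def chi_def algebra_simps)

lemma sig_chi_l: "chi u (sig e y) = chi u y - (chi e y - chi y e) * chi u e"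
  by (simp add: sig_def chi_lin)
lemma sig_chi_r: "chi (sig e y) u = chi y u - (chi e y - chi y e) * chi e u"
  by (simp add: sig_def chi_lin)

lemma lc4_chi_l: "chi (lc4 k0 k1 k2 k3 a b c d) u = k0 * chi a u + k1 * chi b u + k2 * chi c u + k3 * chi d u"
  by (simp add: lc4_def chi_lin)
lemma lc4_chi_r: "chi u (lc4 k0 k1 k2 k3 a b c d) = k0 * chi u a + k1 * chi u b + k2 * chi u c + k3 * chi u d"
  by (simp add: lc4_def chi_lin)

lemma serre_a:
  assumes g: "gram4 a b c d"
  shows "chi a (sig a (sig b (sig c (sig d (lc4 k0 k1 k2 k3 a b c d))))) = chi (lc4 k0 k1 k2 k3 a b c d) a"
  using g unfolding gram4_def
  by (simp add: sig_chi_l sig_chi_r lc4_chi_l lc4_chi_r algebra_simps)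

lemma serre_b:
  assumes g: "gram4 a b c d"
  shows "chi b (sig a (sig b (sig c (sig d (lc4 k0 k1 k2 k3 a b c d))))) = chi (lc4 k0 k1 k2 k3 a b c d) b"
  using g unfolding gram4_def
  by (simp add: sig_chi_l sig_chi_r lc4_chi_l lc4_chi_r algebra_simps)

lemma serre_c:
  assumes g: "gram4 a b c d"
  shows "chi c (sig a (sig b (sig c (sig d (lc4 k0 k1 k2 k3 a b c d))))) = chi (lc4 k0 k1 k2 k3 a b c d) c"
  using g unfolding gram4_def
  by (simp add: sig_chi_l sig_chi_r lc4_chi_l lc4_chi_r algebra_simps)

lemma serre_d:
  assumes g: "gram4 a b c d"
  shows "chi d (sig a (sig b (sig c (sig d (lc4 k0 k1 k2 k3 a b c d))))) = chi (lc4 k0 k1 k2 k3 a b c d) d"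
  using g unfolding gram4_def
  by (simp add: sig_chi_l sig_chi_r lc4_chi_l lc4_chi_r algebra_simps)

lemma nondeg: assumes "\<And>v. chi v y = chi v z" shows "y = z"
proof -
  have e0: "chi (mk4 1 0 0 0) y = chi (mk4 1 0 0 0) z" and e1: "chi (mk4 0 1 0 0) y = chi (mk4 0 1 0 0) z"
   and e2: "chi (mk4 0 0 1 0) y = chi (mk4 0 0 1 0) z" and e3: "chi (mk4 0 0 0 1) y = chi (mk4 0 0 0 1) z"
    using assms by blast+
  from e0 e1 e2 e3 show ?thesis by (simp add: chi_def vsplit)
qed

lemma serre:
  assumes ex: "exc4 a b c d"
  shows "sig a (sig b (sig c (sig d x))) = kap x"
proof -
  have g: "gram4 a b c d" and sp: "span4 a b c d" using ex by (auto simp: exc4_def)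
  obtain k0 k1 k2 k3 where x: "x = lc4 k0 k1 k2 k3 a b c d" using sp unfolding span4_def by blast
  let ?y = "sig a (sig b (sig c (sig d x)))"
  have "chi v ?y = chi v (kap x)" for v
  proof -
    obtain m0 m1 m2 m3 where v: "v = lc4 m0 m1 m2 m3 a b c d" using sp unfolding span4_def by blast
    have "chi v ?y = m0 * chi a ?y + m1 * chi b ?y + m2 * chi c ?y + m3 * chi d ?y"
      by (simp add: v lc4_chi_l)
    also have "\<dots> = m0 * chi x a + m1 * chi x b + m2 * chi x c + m3 * chi x d"
      using serre_a[OF g] serre_b[OF g] serre_c[OF g] serre_d[OF g] x by simp
    also have "\<dots> = chi x v" by (simp add: v lc4_chi_r)
    finally show ?thesis by (simp add: kap_chi)
  qed
  then show ?thesis by (rule nondeg)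
qed


type_synonym m2 = "int \<times> int \<times> int \<times> int"

fun mmul :: "m2 \<Rightarrow> m2 \<Rightarrow> m2" where
  "mmul (a,b,c,d) (e,f,g,h) = (a*e + b*g, a*f + b*h, c*e + d*g, c*f + d*h)"

fun tr2 :: "m2 \<Rightarrow> int" where "tr2 (a,b,c,d) = a + d"

definition tm :: "int \<Rightarrow> int \<Rightarrow> m2" where "tm r s = (1 + 2*r * s, -2*r*r, 2 * s * s, 1 - 2*r * s)"
definition tmi :: "int \<Rightarrow> int \<Rightarrow> m2" where "tmi r s = (1 - 2*r * s, 2*r*r, -2 * s * s, 1 + 2*r * s)"
definition T0 :: m2 where "T0 = (1, 0, -4, 1)"
definition T0i :: m2 where "T0i = (1, 0, 4, 1)"
definition I2 :: m2 where "I2 = (1, 0, 0, 1)"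

lemma mmul_assoc: "mmul (mmul x y) z = mmul x (mmul y z)"
  by (cases x; cases y; cases z) (simp add: algebra_simps)
lemma mmul_I: "mmul I2 x = x" "mmul x I2 = x"
  by (cases x, simp add: I2_def)+
lemma tm_inv: "mmul (tm r s) (tmi r s) = I2" "mmul (tmi r s) (tm r s) = I2"
  by (simp_all add: tm_def tmi_def I2_def algebra_simps)
lemma T0_inv: "mmul T0 T0i = I2" "mmul T0i T0 = I2"
  by (simp_all add: T0_def T0i_def I2_def)

lemma plane_rel:
  fixes ra sa rb sb rc sc rd sd :: int
  assumes M: "mmul (mmul (mmul (tm ra sa) (tm rb sb)) (tm rc sc)) (tm rd sd) = T0"
  defines "d1 \<equiv> ra * sb - rb * sa" and "d2 \<equiv> rb * sc - rc * sb" and "d3 \<equiv> rc * sd - rd * sc"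
    and "d4 \<equiv> 4*ra*rd - (ra * sd - rd * sa)"
  shows "d3^2 = d1^2 + 2*ra^2 + 2*rb^2 - 4*d1*ra*rb"
    and "d4^2 = d2^2 + 2*rb^2 + 2*rc^2 - 4*d2*rb*rc"
    and "d1^2 = d3^2 + 2*rc^2 + 2*rd^2 - 4*d3*rc*rd"
    and "d2^2 = d4^2 + 2*rd^2 + 2*ra^2 - 4*d4*rd*ra"
proof -
  let ?A = "tm ra sa" and ?B = "tm rb sb" and ?C = "tm rc sc" and ?D = "tm rd sd"
  let ?Ai = "tmi ra sa" and ?Bi = "tmi rb sb" and ?Ci = "tmi rc sc" and ?Di = "tmi rd sd"
  have M': "mmul ?A (mmul ?B (mmul ?C ?D)) = T0" using M by (simp add: mmul_assoc)
  have i: "mmul ?A ?B = mmul (mmul T0 ?Di) ?Ci"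
  proof -
    have "mmul (mmul T0 ?Di) ?Ci = mmul (mmul ?A (mmul ?B (mmul ?C (mmul ?D ?Di)))) ?Ci"
      by (simp add: M'[symmetric] mmul_assoc)
    also have "\<dots> = mmul ?A ?B" by (simp add: tm_inv mmul_I mmul_assoc)
    finally show ?thesis by simp
  qed
  have ii: "mmul ?C ?D = mmul (mmul ?Bi ?Ai) T0"
  proof -
    have "mmul (mmul ?Bi ?Ai) T0 = mmul ?Bi (mmul (mmul ?Ai ?A) (mmul ?B (mmul ?C ?D)))"
      by (simp add: M'[symmetric] mmul_assoc)
    also have "\<dots> = mmul ?C ?D" by (simp add: tm_inv mmul_I mmul_assoc[symmetric])
    finally show ?thesis by simp
  qed
  have iii: "mmul ?B ?C = mmul (mmul ?Ai T0) ?Di"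
  proof -
    have "mmul (mmul ?Ai T0) ?Di = mmul (mmul ?Ai ?A) (mmul ?B (mmul ?C (mmul ?D ?Di)))"
      by (simp add: M'[symmetric] mmul_assoc)
    also have "\<dots> = mmul ?B ?C" by (simp add: tm_inv mmul_I mmul_assoc[symmetric])
    finally show ?thesis by simp
  qed
  have Dq: "?D = mmul ?Ci (mmul ?Bi (mmul ?Ai T0))"
  proof -
    have "mmul ?Ci (mmul ?Bi (mmul ?Ai T0)) = mmul ?Ci (mmul ?Bi (mmul (mmul ?Ai ?A) (mmul ?B (mmul ?C ?D))))"
      by (simp add: M'[symmetric] mmul_assoc)
    also have "\<dots> = ?D" by (simp add: tm_inv mmul_I mmul_assoc[symmetric])
    finally show ?thesis by simp
  qed
  have iv: "mmul (mmul (mmul ?D T0i) ?A) T0 = mmul (mmul ?Ci ?Bi) T0"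
  proof -
    have "mmul (mmul (mmul ?D T0i) ?A) T0 = mmul ?Ci (mmul ?Bi (mmul (mmul ?Ai (mmul (mmul T0 T0i) ?A)) T0))"
      by (simp add: Dq mmul_assoc)
    also have "\<dots> = mmul (mmul ?Ci ?Bi) T0" by (simp add: T0_inv tm_inv mmul_I mmul_assoc[symmetric])
    finally show ?thesis .
  qed
  show "d3^2 = d1^2 + 2*ra^2 + 2*rb^2 - 4*d1*ra*rb"
  proof -
    have "tr2 (mmul ?C ?D) = tr2 (mmul (mmul ?Bi ?Ai) T0)" using ii by simp
    then show ?thesis by (simp add: tm_def tmi_def T0_def d1_def d3_def power2_eq_square algebra_simps)
  qed
  show "d1^2 = d3^2 + 2*rc^2 + 2*rd^2 - 4*d3*rc*rd"
  proof -
    have "tr2 (mmul ?A ?B) = tr2 (mmul (mmul T0 ?Di) ?Ci)" using i by simp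
    then show ?thesis by (simp add: tm_def tmi_def T0_def d1_def d3_def power2_eq_square algebra_simps)
  qed
  show "d2^2 = d4^2 + 2*rd^2 + 2*ra^2 - 4*d4*rd*ra"
  proof -
    have "tr2 (mmul ?B ?C) = tr2 (mmul (mmul ?Ai T0) ?Di)" using iii by simp
    then show ?thesis by (simp add: tm_def tmi_def T0_def d2_def d4_def power2_eq_square algebra_simps)
  qed
  show "d4^2 = d2^2 + 2*rb^2 + 2*rc^2 - 4*d2*rb*rc"
  proof -
    have "tr2 (mmul (mmul (mmul ?D T0i) ?A) T0) = tr2 (mmul (mmul ?Ci ?Bi) T0)" using iv by simp
    then show ?thesis by (simp add: tm_def tmi_def T0_def T0i_def d2_def d4_def power2_eq_square algebra_simps)
  qed
qed


fun app2 :: "m2 \<Rightarrow> int \<times> int \<Rightarrow> int \<times> int" where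
  "app2 (a,b,c,d) (x,y) = (a*x + b*y, c*x + d*y)"

definition PP :: "K0 \<Rightarrow> int \<times> int" where "PP v = (rk v, sl v)"

lemma app2_mmul: "app2 (mmul X Y) v = app2 X (app2 Y v)"
  by (cases X; cases Y; cases v) (simp add: algebra_simps)

lemma PP_sig: "PP (sig e y) = app2 (tm (rk e) (sl e)) (PP y)"
proof -
  have h: "chi e y = chi y e + 2 * dt e y" using chi_antisym[of e y] by simp
  show ?thesis by (simp add: PP_def sig_def tm_def rk_lin sl_lin h dt_def algebra_simps)
qed

lemma rk_kap: "rk (kap x) = rk x" by (simp add: kap_def rk_def)
lemma sl_kap: "sl (kap x) = sl x - 4 * rk x" by (simp add: kap_def rk_def sl_def)

lemma PP_kap: "PP (kap x) = app2 T0 (PP x)"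
  by (simp add: PP_def rk_kap sl_kap T0_def)

lemma plane_identity:
  assumes ex: "exc4 a b c d"
  shows "mmul (mmul (mmul (tm (rk a) (sl a)) (tm (rk b) (sl b))) (tm (rk c) (sl c))) (tm (rk d) (sl d)) = T0"
proof -
  let ?M = "mmul (mmul (mmul (tm (rk a) (sl a)) (tm (rk b) (sl b))) (tm (rk c) (sl c))) (tm (rk d) (sl d))"
  have key: "app2 ?M (PP x) = app2 T0 (PP x)" for x
  proof -
    have "app2 ?M (PP x) = PP (sig a (sig b (sig c (sig d x))))"
      by (simp add: app2_mmul PP_sig)
    also have "\<dots> = PP (kap x)" using serre[OF ex] by simp
    finally show ?thesis by (simp add: PP_kap)
  qed
  have p1: "PP (mk4 1 0 0 0) = (1, 0)" and p2: "PP (mk4 (-1) 1 0 0) = (0, 1)"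
    by (simp_all add: PP_def rk_def sl_def)
  obtain m1 m2 m3 m4 where m: "?M = (m1, m2, m3, m4)" by (cases ?M) auto
  have "app2 ?M (1,0) = app2 T0 (1,0)" "app2 ?M (0,1) = app2 T0 (0,1)"
    using key[of "mk4 1 0 0 0"] key[of "mk4 (-1) 1 0 0"] p1 p2 by simp_all
  then show ?thesis using m by (simp add: T0_def)
qed



lemma sq_le_imp: fixes x y :: int assumes "x * x \<le> y * y" "0 \<le> y" shows "x \<le> y"
proof (rule ccontr)
  assume "\<not> x \<le> y" then have "y < x" by simp
  then have "y * y < x * x" using assms(2) mult_strict_mono[of y x y x] by simp
  with assms(1) show False by simp
qed
lemma sq_lt_imp: fixes x y :: int assumes "x * x < y * y" "0 \<le> y" shows "x < y"
proof (rule ccontr)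
  assume "\<not> x < y" then have "y \<le> x" by simp
  then have "y * y \<le> x * x" using assms(2) mult_mono[of y x y x] by simp
  with assms(1) show False by simp
qed

lemma one_le_mult: fixes p q :: int assumes "p \<ge> 1" "q \<ge> 1" shows "p * q \<ge> 1"
  using assms mult_mono[of 1 p 1 q] by simp

lemma two_sq: fixes p q :: int assumes "p \<ge> 1" "q \<ge> 1" shows "2 * (p * p) * (q * q) \<ge> p * p + q * q"
proof -
  have p1: "p * p \<ge> 1" and q1: "q * q \<ge> 1" using assms one_le_mult by auto
  have a: "(p * p) * (q * q - 1) \<ge> 0" using p1 q1 by simp
  have b: "(q * q) * (p * p - 1) \<ge> 0" using p1 q1 by simp
  have "(p * p) * (q * q - 1) + (q * q) * (p * p - 1) = 2 * (p * p) * (q * q) - (p * p + q * q)" by (simp add: algebra_simps)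
  with a b show ?thesis by linarith
qed

lemma two_sq_eq: fixes p q :: int assumes "p \<ge> 1" "q \<ge> 1" "2 * (p * p) * (q * q) = p * p + q * q" shows "p = 1 \<and> q = 1"
proof -
  have p1: "p * p \<ge> 1" and q1: "q * q \<ge> 1" using assms one_le_mult by auto
  have a: "(p * p) * (q * q - 1) \<ge> 0" using p1 q1 by simp
  have b: "(q * q) * (p * p - 1) \<ge> 0" using p1 q1 by simp
  have "(p * p) * (q * q - 1) + (q * q) * (p * p - 1) = 2 * (p * p) * (q * q) - (p * p + q * q)" by (simp add: algebra_simps)
  then have "(p * p) * (q * q - 1) + (q * q) * (p * p - 1) = 0" using assms(3) by simp
  then have "(p * p) * (q * q - 1) = 0" "(q * q) * (p * p - 1) = 0" using a b by linarith+
  then have "q * q = 1" "p * p = 1" using p1 q1 by auto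
  moreover have "p * 1 \<le> p * p" "q * 1 \<le> q * q" using assms by (intro mult_left_mono; simp)+
  ultimately have "p \<le> 1" "q \<le> 1" by simp_all
  then show ?thesis using assms by simp
qed

lemma HN:
  fixes p q p' q' u v :: int
  assumes pos: "p \<ge> 1" "q \<ge> 1" "p' \<ge> 1" "q' \<ge> 1"
    and hu: "u \<ge> 3 * p * q" and hv: "v \<le> 0"
    and e1: "v * v = u * u + 2 * p * p + 2 * q * q - 4 * u * p * q"
    and e2: "u * u = v * v + 2 * p' * p' + 2 * q' * q' - 4 * v * p' * q'"
  shows "u + v \<ge> 2 * p * q" "u + v \<le> 2 * p' * q'" "p' * q' * u + p * q * v \<ge> 2 * p * q * p' * q'"
    "\<not>(p = 1 \<and> q = 1 \<and> p' = 1 \<and> q' = 1) \<Longrightarrow> p' * q' * u + p * q * v > 2 * p * q * p' * q'"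
proof -
  define A where "A = p * q"
  define B where "B = p' * q'"
  have A1: "A \<ge> 1" using pos one_le_mult by (simp add: A_def)
  have B1: "B \<ge> 1" using pos one_le_mult by (simp add: B_def)
  define K where "K = 4 * (A * A) - 2 * (p * p) - 2 * (q * q)"
  define K' where "K' = 4 * (B * B) - 2 * (p' * p') - 2 * (q' * q')"
  have K0: "K \<ge> 0" using two_sq[OF pos(1,2)] unfolding K_def A_def by (simp add: algebra_simps)
  have K'0: "K' \<ge> 0" using two_sq[OF pos(3,4)] unfolding K'_def B_def by (simp add: algebra_simps)
  have v2: "(-v) * (-v) = (u - 2 * A) * (u - 2 * A) - K" using e1 unfolding K_def A_def by (simp add: algebra_simps)
  have u2: "u * u = (2 * B - v) * (2 * B - v) - K'" using e2 unfolding K'_def B_def by (simp add: algebra_simps)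
  have uA: "u - 2 * A \<ge> A" using hu by (simp add: A_def)
  have c1: "-v \<le> u - 2 * A" using sq_le_imp[of "-v" "u - 2 * A"] v2 K0 uA A1 by linarith
  have c2: "u \<le> 2 * B - v" using sq_le_imp[of u "2 * B - v"] u2 K'0 hv B1 by linarith
  show s1: "u + v \<ge> 2 * p * q" using c1 by (simp add: A_def)
  show s2: "u + v \<le> 2 * p' * q'" using c2 by (simp add: B_def)
  have id: "B * u + A * v - 2 * A * B = (B - A) * (u - 2 * A) + A * (u + v - 2 * A)" by (simp add: algebra_simps)
  have BA: "B \<ge> A" using c1 c2 by linarith
  have t1: "(B - A) * (u - 2 * A) \<ge> 0" using BA uA A1 by simp
  have t2: "A * (u + v - 2 * A) \<ge> 0" using A1 c1 by simp
  have main: "B * u + A * v \<ge> 2 * A * B" using id t1 t2 by linarith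
  then show "p' * q' * u + p * q * v \<ge> 2 * p * q * p' * q'" by (simp add: A_def B_def algebra_simps)
  assume nt: "\<not>(p = 1 \<and> q = 1 \<and> p' = 1 \<and> q' = 1)"
  have "B * u + A * v - 2 * A * B > 0"
  proof (cases "B > A")
    case True
    then have "(B - A) * (u - 2 * A) > 0" using uA A1 by simp
    then show ?thesis using id t2 by linarith
  next
    case False
    then have BeqA: "B = A" using BA by simp
    have "K = 0 \<and> K' = 0"
    proof (rule ccontr)
      assume "\<not>(K = 0 \<and> K' = 0)"
      then have "K > 0 \<or> K' > 0" using K0 K'0 by linarith
      then show False
      proof
        assume "K > 0"
        then have "(-v) * (-v) < (u - 2 * A) * (u - 2 * A)" using v2 by linarith
        then have "-v < u - 2 * A" using sq_lt_imp[of "-v" "u - 2 * A"] uA A1 by linarith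
        then show False using c2 BeqA by linarith
      next
        assume "K' > 0"
        then have "u * u < (2 * B - v) * (2 * B - v)" using u2 by linarith
        then have "u < 2 * B - v" using sq_lt_imp[of u "2 * B - v"] hv B1 by linarith
        then show False using c1 BeqA by linarith
      qed
    qed
    then have "2 * (p * p) * (q * q) = p * p + q * q" "2 * (p' * p') * (q' * q') = p' * p' + q' * q'"
      unfolding K_def K'_def A_def B_def by (simp_all add: algebra_simps)
    then show ?thesis using two_sq_eq pos nt by blast
  qed
  then show "p' * q' * u + p * q * v > 2 * p * q * p' * q'" by (simp add: A_def B_def algebra_simps)
qed

lemma pairtype_le:
  fixes p q d x :: int
  assumes p1: "p \<ge> 1" and pq: "p \<le> q" and d0: "d > 0" and nd: "d * p \<ge> q"
    and F: "x * x = d * d + 2 * p * p + 2 * q * q - 4 * d * p * q"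
  shows "(p = q \<and> d = 1) \<or> (p = 1 \<and> q = 1 \<and> d = 2) \<or> d \<ge> 3 * p * q"
proof (rule ccontr)
  assume nt: "\<not> ((p = q \<and> d = 1) \<or> (p = 1 \<and> q = 1 \<and> d = 2) \<or> d \<ge> 3 * p * q)"
  then have d3: "d < 3 * p * q" by simp
  define F where "F = d * d + 2 * p * p + 2 * q * q - 4 * d * p * q"
  have F0: "F \<ge> 0" using F unfolding F_def[symmetric] by (metis zero_le_square)
  show False
  proof (cases "p < q")
    case True
    then have q1: "q \<ge> p + 1" by simp
    show False
    proof (cases "d \<le> 2 * p * q")
      case True
      have idt: "(p * p) * F = (p * d - q) * (p * d - 4 * (p * p) * q + q) + (q * q - 2 * (p * p) * (q * q) + 2 * (p * p) * (p * p))"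
        unfolding F_def by (simp add: algebra_simps)
      have f1: "p * d - q \<ge> 0" using nd by (simp add: mult.commute)
      have "p * d \<le> p * (2 * p * q)" using True p1 by (intro mult_left_mono) auto
      then have f2: "p * d - 4 * (p * p) * q + q \<le> q - 2 * (p * p) * q" by (simp add: algebra_simps)
      have "(p * p) * q \<ge> 1 * q" using p1 q1 one_le_mult[OF p1 p1] by (intro mult_right_mono) auto
      then have f3: "q - 2 * (p * p) * q < 0" using p1 q1 by linarith
      have prod: "(p * d - q) * (p * d - 4 * (p * p) * q + q) \<le> 0"
        using f1 f2 f3 by (intro mult_nonneg_nonpos) auto
      have pp1: "p * p \<ge> 1" using one_le_mult[OF p1 p1] .
      have qq: "q * q \<ge> (p+1) * (p+1)" using q1 p1 by (intro mult_mono) auto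
      have "q * q * (2 * (p * p) - 1) \<ge> (p+1) * (p+1) * (2 * (p * p) - 1)" using qq pp1 by (intro mult_right_mono) auto
      moreover have "(p+1) * (p+1) * (2 * (p * p) - 1) - 2 * (p * p) * (p * p) = 4 * (p * p * p) + p * p - 2 * p - 1"
        by (simp add: algebra_simps)
      moreover have "p * p * p \<ge> p" using p1 pp1 mult_mono[of 1 "p * p" p p] by (simp add: algebra_simps)
      moreover have "q * q * (2 * (p * p) - 1) = 2 * (p * p) * (q * q) - q * q" by (simp add: algebra_simps)
      ultimately have c: "q * q - 2 * (p * p) * (q * q) + 2 * (p * p) * (p * p) < 0" using p1 pp1 by linarith
      have "(p * p) * F < 0" using idt prod c by linarith
      moreover have "(p * p) * F \<ge> 0" using F0 pp1 by simp
      ultimately show False by simp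
    next
      case False
      then have g1: "d - 2 * p * q > 0" by simp
      have g2: "d - 2 * p * q < p * q" using d3 by simp
      have "(d - 2 * p * q) * (d - 2 * p * q) < (p * q) * (p * q)" using g1 g2 by (intro mult_strict_mono) auto
      moreover have idt: "F = (d - 2 * p * q) * (d - 2 * p * q) - (4 * ((p * q) * (p * q)) - 2 * (p * p) - 2 * (q * q))"
        unfolding F_def by (simp add: algebra_simps)
      moreover have "3 * ((p * q) * (p * q)) \<ge> 2 * (p * p) + 2 * (q * q)"
      proof -
        have pp1: "p * p \<ge> 1" using one_le_mult[OF p1 p1] .
        have qq2: "q * q \<ge> 2" using q1 p1 mult_mono[of 2 q 2 q] by simp
        have "(p * p) * (3 * (q * q) - 2) \<ge> 1 * (3 * (q * q) - 2)" using pp1 qq2 by (intro mult_right_mono) auto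
        then have h1: "3 * (q * q) - 2 \<le> (p * p) * (3 * (q * q) - 2)" by simp
        have h2: "(p * p) * (3 * (q * q) - 2) = 3 * ((p * q) * (p * q)) - 2 * (p * p)" by (simp add: algebra_simps)
        show ?thesis using h1 h2 qq2 by linarith
      qed
      ultimately have "F < 0" by linarith
      then show False using F0 by simp
    qed
  next
    case False
    then have qp: "q = p" using pq by simp
    have Fp: "F = 1 - (d - 1) * (4 * (p * p) - 1 - d)" unfolding F_def qp by (simp add: algebra_simps)
    have dn1: "d \<noteq> 1" using nt qp by auto
    show False
    proof (cases "p = 1")
      case True
      then have "d < 3" using d3 qp by simp
      moreover have "d \<noteq> 2" using nt qp True by auto
      ultimately show False using d0 dn1 by linarith
    next
      case False
      then have p2: "p \<ge> 2" using p1 by simp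
      have pp4: "p * p \<ge> 4" using p2 mult_mono[of 2 p 2 p] by simp
      have a1: "d - 1 \<ge> 1" using d0 dn1 by simp
      have a2: "4 * (p * p) - 1 - d \<ge> 1" using d3 qp pp4 by (simp add: algebra_simps)
      have "(d - 1) * (4 * (p * p) - 1 - d) \<ge> 2"
      proof (cases "d - 1 \<ge> 2")
        case True
        then have "(d - 1) * (4 * (p * p) - 1 - d) \<ge> 2 * 1" using a2 by (intro mult_mono) auto
        then show ?thesis by simp
      next
        case False
        then have "d = 2" using a1 by simp
        then show ?thesis using pp4 by simp
      qed
      then have "F < 0" using Fp by linarith
      then show False using F0 by simp
    qed
  qed
qed

lemma pairtype:
  fixes p q d x :: int
  assumes p1: "p \<ge> 1" and q1: "q \<ge> 1" and d0: "d > 0"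
    and nd: "\<not> ((p \<le> q \<and> d * p < q) \<or> (q \<le> p \<and> d * q < p))"
    and F: "x * x = d * d + 2 * p * p + 2 * q * q - 4 * d * p * q"
  shows "(p = q \<and> d = 1) \<or> (p = 1 \<and> q = 1 \<and> d = 2) \<or> d \<ge> 3 * p * q"
proof (cases "p \<le> q")
  case True then show ?thesis using pairtype_le[OF p1 True d0 _ F] nd by linarith
next
  case False
  then have "q \<le> p" by simp
  moreover have "x * x = d * d + 2 * q * q + 2 * p * p - 4 * d * q * p" using F by (simp add: algebra_simps)
  ultimately have "(q = p \<and> d = 1) \<or> (q = 1 \<and> p = 1 \<and> d = 2) \<or> d \<ge> 3 * q * p"
    using pairtype_le[OF q1 _ d0] nd by (meson not_le)
  then show ?thesis by (auto simp: algebra_simps)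
qed

lemma sq1: fixes x :: int assumes "x * x = 1" "x > 0" shows "x = 1"
proof -
  have "x * 1 \<le> x * x" using assms by (intro mult_left_mono) auto
  then show ?thesis using assms by simp
qed

lemma opp:
  fixes p q p' q' u v :: int
  assumes pos: "p \<ge> 1" "q \<ge> 1" "p' \<ge> 1" "q' \<ge> 1"
    and e1: "v * v = u * u + 2 * p * p + 2 * q * q - 4 * u * p * q"
    and e2: "u * u = v * v + 2 * p' * p' + 2 * q' * q' - 4 * v * p' * q'"
    and tu: "u \<le> 0 \<or> (p = q \<and> u = 1) \<or> u \<ge> 3 * p * q"
    and tv: "v \<le> 0 \<or> (p' = q' \<and> v = 1) \<or> v \<ge> 3 * p' * q'"
  shows "(p = q \<and> u = 1 \<and> p' = q' \<and> v = 1) \<or> (u \<ge> 3 * p * q \<and> v \<le> 0) \<or> (v \<ge> 3 * p' * q' \<and> u \<le> 0)"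
proof -
  have S: "2 * (p * q) * u + 2 * (p' * q') * v = p * p + q * q + p' * p' + q' * q'" using e1 e2 by (simp add: algebra_simps)
  have pp: "p * p \<ge> 1" "q * q \<ge> 1" "p' * p' \<ge> 1" "q' * q' \<ge> 1" using pos one_le_mult by auto
  have A1: "p * q \<ge> 1" "p' * q' \<ge> 1" using pos one_le_mult by auto
  have notNN: "\<not> (u \<le> 0 \<and> v \<le> 0)"
  proof
    assume "u \<le> 0 \<and> v \<le> 0"
    then have "2 * (p * q) * u \<le> 0" "2 * (p' * q') * v \<le> 0" using A1 by (simp_all add: mult_nonneg_nonpos)
    then show False using S pp by linarith
  qed
  have notHH: "\<not> (u \<ge> 3 * p * q \<and> v \<ge> 3 * p' * q')"
  proof
    assume h: "u \<ge> 3 * p * q \<and> v \<ge> 3 * p' * q'"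
    have "2 * (p * q) * u \<ge> 2 * (p * q) * (3 * p * q)" using h A1 by (intro mult_left_mono) auto
    moreover have "2 * (p' * q') * v \<ge> 2 * (p' * q') * (3 * p' * q')" using h A1 by (intro mult_left_mono) auto
    moreover have "2 * (p * p) * (q * q) \<ge> p * p + q * q" using two_sq pos by blast
    moreover have "2 * (p' * p') * (q' * q') \<ge> p' * p' + q' * q'" using two_sq pos by blast
    moreover have "2 * (p * q) * (3 * p * q) = 3 * (2 * (p * p) * (q * q))" "2 * (p' * q') * (3 * p' * q') = 3 * (2 * (p' * p') * (q' * q'))"
      by (simp_all add: algebra_simps)
    ultimately show False using S pp by linarith
  qed
  have B1u: "p' = q' \<and> v = 1" if "p = q" "u = 1"
  proof -
    have "v * v = 1" using e1 that by (simp add: algebra_simps)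
    have "2 * (p' * q') * v = p' * p' + q' * q'" using S that by (simp add: algebra_simps)
    then have "2 * (p' * q') * v > 0" using pp by linarith
    then have "v > 0" using A1 by (simp add: zero_less_mult_iff)
    then have v1: "v = 1" using sq1 \<open>v * v = 1\<close> by blast
    then have "(p' - q') * (p' - q') = 0" using \<open>2 * (p' * q') * v = p' * p' + q' * q'\<close> by (simp add: algebra_simps)
    then show ?thesis using v1 by simp
  qed
  have B1v: "p = q \<and> u = 1" if "p' = q'" "v = 1"
  proof -
    have "u * u = 1" using e2 that by (simp add: algebra_simps)
    have "2 * (p * q) * u = p * p + q * q" using S that by (simp add: algebra_simps)
    then have "2 * (p * q) * u > 0" using pp by linarith
    then have "u > 0" using A1 by (simp add: zero_less_mult_iff)
    then have u1: "u = 1" using sq1 \<open>u * u = 1\<close> by blast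
    then have "(p - q) * (p - q) = 0" using \<open>2 * (p * q) * u = p * p + q * q\<close> by (simp add: algebra_simps)
    then show ?thesis using u1 by simp
  qed
  show ?thesis using tu tv notNN notHH B1u B1v by auto
qed

definition dec :: "int \<Rightarrow> int \<Rightarrow> int \<Rightarrow> bool" where
  "dec p q d \<longleftrightarrow> 0 < d \<and> ((p \<le> q \<and> d * p < q) \<or> (q \<le> p \<and> d * q < p))"

lemma type3:
  fixes p q d x p' q' y :: int
  assumes pos: "p \<ge> 1" "q \<ge> 1" "p' \<ge> 1" "q' \<ge> 1" and nd: "\<not> dec p q d"
    and F: "x * x = d * d + 2 * p * p + 2 * q * q - 4 * d * p * q"
    and Fo: "d * d = x * x + 2 * p' * p' + 2 * q' * q' - 4 * x * p' * q'"
    and nb: "\<not> (p = 1 \<and> q = 1 \<and> p' = 1 \<and> q' = 1)"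
  shows "d \<le> 0 \<or> (p = q \<and> d = 1) \<or> d \<ge> 3 * p * q"
proof (cases "d > 0")
  case True
  then have "(p = q \<and> d = 1) \<or> (p = 1 \<and> q = 1 \<and> d = 2) \<or> d \<ge> 3 * p * q"
    using pairtype[OF pos(1,2) True _ F] nd by (simp add: dec_def)
  moreover have "\<not> (p = 1 \<and> q = 1 \<and> d = 2)"
  proof
    assume h: "p = 1 \<and> q = 1 \<and> d = 2"
    then have "x * x = 0" using F by simp
    then have "x = 0" by simp
    then have "p' * p' + q' * q' = 2" using Fo h by simp
    moreover have "p' * p' \<ge> 1" "q' * q' \<ge> 1" using pos one_le_mult by auto
    ultimately have "p' * p' = 1" "q' * q' = 1" by linarith+
    then have "p' = 1" "q' = 1" using sq1[of p'] sq1[of q'] pos(3,4) by simp_all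
    then show False using nb h by simp
  qed
  ultimately show ?thesis by blast
qed simp



lemma descent_arith:
  fixes r1 r2 r3 r4 d1 d2 d3 d4 :: int
  assumes pos: "r1 \<ge> 1" "r2 \<ge> 1" "r3 \<ge> 1" "r4 \<ge> 1"
    and E1: "d3 * d3 = d1 * d1 + 2 * r1 * r1 + 2 * r2 * r2 - 4 * d1 * r1 * r2"
    and E2: "d4 * d4 = d2 * d2 + 2 * r2 * r2 + 2 * r3 * r3 - 4 * d2 * r2 * r3"
    and E3: "d1 * d1 = d3 * d3 + 2 * r3 * r3 + 2 * r4 * r4 - 4 * d3 * r3 * r4"
    and E4: "d2 * d2 = d4 * d4 + 2 * r4 * r4 + 2 * r1 * r1 - 4 * d4 * r4 * r1"
    and Sg: "r3 * r4 * d1 + r4 * r1 * d2 + r1 * r2 * d3 + r2 * r3 * d4 = 4 * (r1 * r2 * r3 * r4)"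
    and nb: "\<not> (r1 = 1 \<and> r2 = 1 \<and> r3 = 1 \<and> r4 = 1)"
  shows "dec r1 r2 d1 \<or> dec r2 r3 d2 \<or> dec r3 r4 d3 \<or> dec r4 r1 d4"
proof (rule ccontr)
  assume nd: "\<not> (dec r1 r2 d1 \<or> dec r2 r3 d2 \<or> dec r3 r4 d3 \<or> dec r4 r1 d4)"
  have nb': "\<not> (r3 = 1 \<and> r4 = 1 \<and> r1 = 1 \<and> r2 = 1)" "\<not> (r2 = 1 \<and> r3 = 1 \<and> r4 = 1 \<and> r1 = 1)"
    "\<not> (r4 = 1 \<and> r1 = 1 \<and> r2 = 1 \<and> r3 = 1)" using nb by auto
  have t1: "d1 \<le> 0 \<or> (r1 = r2 \<and> d1 = 1) \<or> d1 \<ge> 3 * r1 * r2"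
    using type3[OF pos(1,2,3,4) _ E1 E3 nb] nd by blast
  have t3: "d3 \<le> 0 \<or> (r3 = r4 \<and> d3 = 1) \<or> d3 \<ge> 3 * r3 * r4"
    using type3[OF pos(3,4,1,2) _ E3 E1 nb'(1)] nd by blast
  have t2: "d2 \<le> 0 \<or> (r2 = r3 \<and> d2 = 1) \<or> d2 \<ge> 3 * r2 * r3"
    using type3[OF pos(2,3,4,1) _ E2 E4 nb'(2)] nd by blast
  have t4: "d4 \<le> 0 \<or> (r4 = r1 \<and> d4 = 1) \<or> d4 \<ge> 3 * r4 * r1"
    using type3[OF pos(4,1,2,3) _ E4 E2 nb'(3)] nd by blast
  have o13: "(r1 = r2 \<and> d1 = 1 \<and> r3 = r4 \<and> d3 = 1) \<or> (d1 \<ge> 3 * r1 * r2 \<and> d3 \<le> 0) \<or> (d3 \<ge> 3 * r3 * r4 \<and> d1 \<le> 0)"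
    using opp[OF pos(1,2,3,4) E1 E3 t1 t3] .
  have o24: "(r2 = r3 \<and> d2 = 1 \<and> r4 = r1 \<and> d4 = 1) \<or> (d2 \<ge> 3 * r2 * r3 \<and> d4 \<le> 0) \<or> (d4 \<ge> 3 * r4 * r1 \<and> d2 \<le> 0)"
    using opp[OF pos(2,3,4,1) E2 E4 t2 t4] .
  have S13: "2 * (r1 * r2) * d1 + 2 * (r3 * r4) * d3 = r1 * r1 + r2 * r2 + r3 * r3 + r4 * r4" using E1 E3 by (simp add: algebra_simps)
  have S24: "2 * (r2 * r3) * d2 + 2 * (r4 * r1) * d4 = r1 * r1 + r2 * r2 + r3 * r3 + r4 * r4" using E2 E4 by (simp add: algebra_simps)
  have H13: "r3 * r4 * d1 + r1 * r2 * d3 > 2 * (r1 * r2 * r3 * r4)" if "(d1 \<ge> 3 * r1 * r2 \<and> d3 \<le> 0) \<or> (d3 \<ge> 3 * r3 * r4 \<and> d1 \<le> 0)"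
    using that
  proof
    assume h: "d1 \<ge> 3 * r1 * r2 \<and> d3 \<le> 0"
    have "r3 * r4 * d1 + r1 * r2 * d3 > 2 * r1 * r2 * r3 * r4"
      using HN(4)[OF pos(1,2,3,4) _ _ E1 E3 nb] h by blast
    then show ?thesis by (simp add: algebra_simps)
  next
    assume h: "d3 \<ge> 3 * r3 * r4 \<and> d1 \<le> 0"
    have "r1 * r2 * d3 + r3 * r4 * d1 > 2 * r3 * r4 * r1 * r2"
      using HN(4)[OF pos(3,4,1,2) _ _ E3 E1 nb'(1)] h by blast
    then show ?thesis by (simp add: algebra_simps)
  qed
  have H24: "r4 * r1 * d2 + r2 * r3 * d4 > 2 * (r1 * r2 * r3 * r4)" if "(d2 \<ge> 3 * r2 * r3 \<and> d4 \<le> 0) \<or> (d4 \<ge> 3 * r4 * r1 \<and> d2 \<le> 0)"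
    using that
  proof
    assume h: "d2 \<ge> 3 * r2 * r3 \<and> d4 \<le> 0"
    have "r4 * r1 * d2 + r2 * r3 * d4 > 2 * r2 * r3 * r4 * r1"
      using HN(4)[OF pos(2,3,4,1) _ _ E2 E4 nb'(2)] h by blast
    then show ?thesis by (simp add: algebra_simps)
  next
    assume h: "d4 \<ge> 3 * r4 * r1 \<and> d2 \<le> 0"
    have "r2 * r3 * d4 + r4 * r1 * d2 > 2 * r4 * r1 * r2 * r3"
      using HN(4)[OF pos(4,1,2,3) _ _ E4 E2 nb'(3)] h by blast
    then show ?thesis by (simp add: algebra_simps)
  qed
  show False
  proof (cases "r1 = r2 \<and> d1 = 1 \<and> r3 = r4 \<and> d3 = 1")
    case A: True
    show False
    proof (cases "r2 = r3 \<and> d2 = 1 \<and> r4 = r1 \<and> d4 = 1")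
      case True
      then have eqs: "r2 = r1" "r3 = r1" "r4 = r1" "d1 = 1" "d2 = 1" "d3 = 1" "d4 = 1" using A by linarith+
      have "r1 * r1 + r1 * r1 + r1 * r1 + r1 * r1 = 4 * (r1 * r1 * r1 * r1)" using Sg unfolding eqs by simp
      then have "r1 * r1 * (r1 * r1 - 1) = 0" by (simp add: algebra_simps)
      moreover have "r1 * r1 \<noteq> 0" using pos by simp
      ultimately have "r1 * r1 - 1 = 0" by simp
      then have "r1 = 1" using sq1[of r1] pos by simp
      then show False using nb eqs by simp
    next
      case False
      then have h: "(d2 \<ge> 3 * r2 * r3 \<and> d4 \<le> 0) \<or> (d4 \<ge> 3 * r4 * r1 \<and> d2 \<le> 0)" using o24 by blast
      have "d2 + d4 = 2 * r2 * r3"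
      proof (cases "d2 \<ge> 3 * r2 * r3 \<and> d4 \<le> 0")
        case True
        then have a: "d2 \<ge> 3 * r2 * r3" and b: "d4 \<le> 0" by simp_all
        have "d2 + d4 \<ge> 2 * r2 * r3" "d2 + d4 \<le> 2 * r4 * r1" using HN(1,2)[OF pos(2,3,4,1) a b E2 E4] by simp_all
        moreover have "r4 * r1 = r2 * r3" using A by simp
        ultimately show ?thesis by linarith
      next
        case False
        then have a: "d4 \<ge> 3 * r4 * r1" and b: "d2 \<le> 0" using h by blast+
        have "d4 + d2 \<ge> 2 * r4 * r1" "d4 + d2 \<le> 2 * r2 * r3" using HN(1,2)[OF pos(4,1,2,3) a b E4 E2] by simp_all
        moreover have "r4 * r1 = r2 * r3" using A by simp
        ultimately show ?thesis by linarith
      qed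
      then have sumd: "d2 + d4 = 2 * r2 * r3" .
      have r41: "r4 * r1 = r2 * r3" "r1 = r2" "r4 = r3" using A by simp_all
      have "2 * (r2 * r3) * d2 + 2 * (r2 * r3) * d4 = r2 * r2 + r2 * r2 + r3 * r3 + r3 * r3" using S24 unfolding r41 by (simp add: mult.commute)
      moreover have "2 * (r2 * r3) * d2 + 2 * (r2 * r3) * d4 = 2 * (r2 * r3) * (d2 + d4)" by (simp add: distrib_left)
      ultimately have "2 * (r2 * r3) * (2 * r2 * r3) = 2 * (r2 * r2 + r3 * r3)" unfolding sumd by simp
      then have "2 * (r2 * r2) * (r3 * r3) = r2 * r2 + r3 * r3" by (simp add: algebra_simps)
      then have "r2 = 1 \<and> r3 = 1" using two_sq_eq pos by blast
      then show False using nb A by simp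
    qed
  next
    case B: False
    then have h13: "(d1 \<ge> 3 * r1 * r2 \<and> d3 \<le> 0) \<or> (d3 \<ge> 3 * r3 * r4 \<and> d1 \<le> 0)" using o13 by blast
    show False
    proof (cases "r2 = r3 \<and> d2 = 1 \<and> r4 = r1 \<and> d4 = 1")
      case A: True
      have "d1 + d3 = 2 * r1 * r2"
      proof (cases "d1 \<ge> 3 * r1 * r2 \<and> d3 \<le> 0")
        case True
        then have a: "d1 \<ge> 3 * r1 * r2" and b: "d3 \<le> 0" by simp_all
        have "d1 + d3 \<ge> 2 * r1 * r2" "d1 + d3 \<le> 2 * r3 * r4" using HN(1,2)[OF pos(1,2,3,4) a b E1 E3] by simp_all
        moreover have "r3 * r4 = r1 * r2" using A by simp
        ultimately show ?thesis by linarith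
      next
        case False
        then have a: "d3 \<ge> 3 * r3 * r4" and b: "d1 \<le> 0" using h13 by blast+
        have "d3 + d1 \<ge> 2 * r3 * r4" "d3 + d1 \<le> 2 * r1 * r2" using HN(1,2)[OF pos(3,4,1,2) a b E3 E1] by simp_all
        moreover have "r3 * r4 = r1 * r2" using A by simp
        ultimately show ?thesis by linarith
      qed
      then have sumd: "d1 + d3 = 2 * r1 * r2" .
      have r41: "r3 * r4 = r1 * r2" "r3 = r2" "r4 = r1" using A by simp_all
      have "2 * (r1 * r2) * d1 + 2 * (r1 * r2) * d3 = r1 * r1 + r2 * r2 + r2 * r2 + r1 * r1" using S13 unfolding r41 by (simp add: mult.commute)
      moreover have "2 * (r1 * r2) * d1 + 2 * (r1 * r2) * d3 = 2 * (r1 * r2) * (d1 + d3)" by (simp add: distrib_left)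
      ultimately have "2 * (r1 * r2) * (2 * r1 * r2) = 2 * (r1 * r1 + r2 * r2)" unfolding sumd by simp
      then have "2 * (r1 * r1) * (r2 * r2) = r1 * r1 + r2 * r2" by (simp add: algebra_simps)
      then have "r1 = 1 \<and> r2 = 1" using two_sq_eq pos by blast
      then show False using nb A by simp
    next
      case False
      then have h24: "(d2 \<ge> 3 * r2 * r3 \<and> d4 \<le> 0) \<or> (d4 \<ge> 3 * r4 * r1 \<and> d2 \<le> 0)" using o24 by blast
      have "r3 * r4 * d1 + r1 * r2 * d3 > 2 * (r1 * r2 * r3 * r4)" using H13 h13 by blast
      moreover have "r4 * r1 * d2 + r2 * r3 * d4 > 2 * (r1 * r2 * r3 * r4)" using H24 h24 by blast
      ultimately show False using Sg by linarith
    qed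
  qed
qed


lemma chi_lower: "chi y x = 0 \<Longrightarrow> chi x y = 2 * dt x y"
  using chi_antisym[of x y] by simp

lemma lat_rel:
  assumes ex: "exc4 a b c d"
  defines "r1 \<equiv> rk a" and "r2 \<equiv> rk b" and "r3 \<equiv> rk c" and "r4 \<equiv> rk d"
    and "d1 \<equiv> dt a b" and "d2 \<equiv> dt b c" and "d3 \<equiv> dt c d" and "d4 \<equiv> 4 * rk a * rk d - dt a d"
  shows "d3 * d3 = d1 * d1 + 2 * r1 * r1 + 2 * r2 * r2 - 4 * d1 * r1 * r2"
    and "d4 * d4 = d2 * d2 + 2 * r2 * r2 + 2 * r3 * r3 - 4 * d2 * r2 * r3"
    and "d1 * d1 = d3 * d3 + 2 * r3 * r3 + 2 * r4 * r4 - 4 * d3 * r3 * r4"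
    and "d2 * d2 = d4 * d4 + 2 * r4 * r4 + 2 * r1 * r1 - 4 * d4 * r4 * r1"
    and "r3 * r4 * d1 + r4 * r1 * d2 + r1 * r2 * d3 + r2 * r3 * d4 = 4 * (r1 * r2 * r3 * r4)"
proof -
  note P = plane_rel[OF plane_identity[OF ex]]
  have dd: "d1 = rk a * sl b - rk b * sl a" "d2 = rk b * sl c - rk c * sl b" "d3 = rk c * sl d - rk d * sl c"
    "d4 = 4 * rk a * rk d - (rk a * sl d - rk d * sl a)"
    by (simp_all add: d1_def d2_def d3_def d4_def dt_def)
  show "d3 * d3 = d1 * d1 + 2 * r1 * r1 + 2 * r2 * r2 - 4 * d1 * r1 * r2"
    using P(1) unfolding dd r1_def r2_def by (simp add: power2_eq_square)
  show "d4 * d4 = d2 * d2 + 2 * r2 * r2 + 2 * r3 * r3 - 4 * d2 * r2 * r3"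
    using P(2) unfolding dd r2_def r3_def by (simp add: power2_eq_square)
  show "d1 * d1 = d3 * d3 + 2 * r3 * r3 + 2 * r4 * r4 - 4 * d3 * r3 * r4"
    using P(3) unfolding dd r3_def r4_def by (simp add: power2_eq_square)
  show "d2 * d2 = d4 * d4 + 2 * r4 * r4 + 2 * r1 * r1 - 4 * d4 * r4 * r1"
    using P(4) unfolding dd r4_def r1_def by (simp add: power2_eq_square)
  show "r3 * r4 * d1 + r4 * r1 * d2 + r1 * r2 * d3 + r2 * r3 * d4 = 4 * (r1 * r2 * r3 * r4)"
    unfolding dd r1_def r2_def r3_def r4_def by (simp add: algebra_simps)
qed

lemma Lmut_sig: "chi z e = 0 \<Longrightarrow> Lmut e z = sig e z"
  by (simp add: Lmut_def sig_def)

lemma sig_self: "sig d d = d" by (simp add: sig_def vsplit)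

lemma rotate:
  assumes ex: "exc4 a b c d"
  shows "mut_step\<^sup>*\<^sup>* [a,b,c,d] [kap d, a, b, c]" and "exc4 (kap d) a b c"
proof -
  have g: "gram4 a b c d" using ex by (simp add: exc4_def)
  have s1: "mut_step [a,b,c,d] [a, b, Lmut c d, c]" by (simp add: step_explicit)
  have s2: "mut_step [a, b, Lmut c d, c] [a, Lmut b (Lmut c d), b, c]" by (simp add: step_explicit)
  have s3: "mut_step [a, Lmut b (Lmut c d), b, c] [Lmut a (Lmut b (Lmut c d)), a, b, c]" by (simp add: step_explicit)
  have "Lmut c d = sig c (sig d d)" using g by (simp add: Lmut_sig gram4_def sig_self)
  moreover have "chi (Lmut c d) b = 0" using g by (simp add: gram4_def Lmut_def chi_lin)
  moreover have "chi (Lmut b (Lmut c d)) a = 0" using g by (simp add: gram4_def Lmut_def chi_lin)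
  ultimately have "Lmut a (Lmut b (Lmut c d)) = sig a (sig b (sig c (sig d d)))"
    by (simp add: Lmut_sig)
  also have "\<dots> = kap d" by (rule serre[OF ex])
  finally have e: "Lmut a (Lmut b (Lmut c d)) = kap d" .
  show "mut_step\<^sup>*\<^sup>* [a,b,c,d] [kap d, a, b, c]" using s1 s2 s3 unfolding e
    by (meson rtranclp.rtrancl_into_rtrancl rtranclp.rtrancl_refl)
  then have "exceptional_basis [kap d, a, b, c]" using steps_exc ex exc_iff by blast
  then show "exc4 (kap d) a b c" by (simp add: exc_iff)
qed

lemma dt_kap: "dt (kap d) a = 4 * rk a * rk d - dt a d"
  by (simp add: dt_def rk_kap sl_kap algebra_simps)

lemma base_rel:
  assumes ex: "exc4 a b c d" and r: "rk a = 1" "rk b = 1" "rk c = 1" "rk d = 1"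
  shows "(dt a b - 1) * (dt b c - 1) = 0"
proof -
  have M: "mmul (mmul (mmul (tm 1 (sl a)) (tm 1 (sl b))) (tm 1 (sl c))) (tm 1 (sl d)) = T0"
    using plane_identity[OF ex] r by simp
  let ?A = "tm 1 (sl a)" and ?B = "tm 1 (sl b)" and ?C = "tm 1 (sl c)" and ?D = "tm 1 (sl d)"
  let ?Ci = "tmi 1 (sl c)" and ?Di = "tmi 1 (sl d)"
  have M': "mmul ?A (mmul ?B (mmul ?C ?D)) = T0" using M by (simp add: mmul_assoc)
  have i: "mmul ?A ?B = mmul (mmul T0 ?Di) ?Ci"
  proof -
    have "mmul (mmul T0 ?Di) ?Ci = mmul (mmul ?A (mmul ?B (mmul ?C (mmul ?D ?Di)))) ?Ci"
      by (simp add: M'[symmetric] mmul_assoc)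
    also have "\<dots> = mmul ?A ?B" by (simp add: tm_inv mmul_I mmul_assoc)
    finally show ?thesis by simp
  qed
  define sa where "sa = sl a"
  define sb where "sb = sl b"
  define sc where "sc = sl c"
  define sd where "sd = sl d"
  have i': "mmul (tm 1 sa) (tm 1 sb) = mmul (mmul T0 (tmi 1 sd)) (tmi 1 sc)"
    using i by (simp add: sa_def sb_def sc_def sd_def)
  obtain e00 e01 where
    "fst (mmul (tm 1 sa) (tm 1 sb)) = e00" "fst (snd (mmul (tm 1 sa) (tm 1 sb))) = e01" by simp
  have E00: "(1 + 2 * sa) * (1 + 2 * sb) + (-2) * (2 * sb * sb) = 
     (1 - 2 * sd) * (1 - 2 * sc) + 2 * (-2 * sc * sc)"
    using arg_cong[OF i', of fst] by (simp add: tm_def tmi_def T0_def algebra_simps)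
  have E01: "(1 + 2 * sa) * (-2) + (-2) * (1 - 2 * sb) = (1 - 2 * sd) * 2 + 2 * (1 + 2 * sc)"
    using arg_cong[OF i', of "\<lambda>x. fst (snd x)"] by (simp add: tm_def tmi_def T0_def algebra_simps)
  have "8 * ((sb - sa - 1) * (sc - sb - 1)) = 0"
  proof -
    define X where "X = (1 + 2 * sa) * (1 + 2 * sb) + (-2) * (2 * sb * sb) - ((1 - 2 * sd) * (1 - 2 * sc) + 2 * (-2 * sc * sc))"
    define Y where "Y = (1 + 2 * sa) * (-2) + (-2) * (1 - 2 * sb) - ((1 - 2 * sd) * 2 + 2 * (1 + 2 * sc))"
    have "X = 0" "Y = 0" using E00 E01 by (simp_all add: X_def Y_def)
    moreover have "8 * ((sb - sa - 1) * (sc - sb - 1)) = 2 * X - (1 - 2 * sc) * Y"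
      by (simp add: X_def Y_def algebra_simps)
    ultimately show ?thesis by simp
  qed
  then have "(sb - sa - 1) * (sc - sb - 1) = 0" by simp
  moreover have "dt a b = sb - sa" "dt b c = sc - sb" using r by (simp_all add: dt_def sa_def sb_def sc_def)
  ultimately show ?thesis by simp
qed


definition rsum :: "K0 list \<Rightarrow> int" where "rsum es = sum_list (map (\<lambda>v. \<bar>rk v\<bar>) es)"

definition sf :: "K0 \<Rightarrow> K0" where "sf v = (if rk v > 0 then v else - v)"

lemma exc4_rk_nz: assumes "exc4 a b c d" shows "rk a \<noteq> 0" "rk b \<noteq> 0" "rk c \<noteq> 0" "rk d \<noteq> 0"
proof -
  have "chi a a = 1" "chi b b = 1" "chi c c = 1" "chi d d = 1" using assms by (simp_all add: exc4_def gram4_def)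
  then have "odd (rk a)" "odd (rk b)" "odd (rk c)" "odd (rk d)" using chi_self_odd by blast+
  then show "rk a \<noteq> 0" "rk b \<noteq> 0" "rk c \<noteq> 0" "rk d \<noteq> 0" by auto
qed

lemma rk_sf: "rk v \<noteq> 0 \<Longrightarrow> rk (sf v) = \<bar>rk v\<bar>"
  by (simp add: sf_def rk_lin)

lemma sf_steps:
  "mut_step\<^sup>*\<^sup>* [a,b,c,d] [sf a, sf b, sf c, sf d]"
proof -
  have s0: "mut_step\<^sup>*\<^sup>* [a,b,c,d] [sf a, b, c, d]"
    by (cases "rk a > 0") (auto simp: sf_def step_explicit)
  have s1: "mut_step\<^sup>*\<^sup>* [sf a, b, c, d] [sf a, sf b, c, d]"
    by (cases "rk b > 0") (auto simp: sf_def step_explicit)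
  have s2: "mut_step\<^sup>*\<^sup>* [sf a, sf b, c, d] [sf a, sf b, sf c, d]"
    by (cases "rk c > 0") (auto simp: sf_def step_explicit)
  have s3: "mut_step\<^sup>*\<^sup>* [sf a, sf b, sf c, d] [sf a, sf b, sf c, sf d]"
    by (cases "rk d > 0") (auto simp: sf_def step_explicit)
  show ?thesis using s0 s1 s2 s3 by (meson rtranclp_trans)
qed

lemma abs_lt: fixes q t :: int assumes "0 < t" "t < q" shows "\<bar>q - 2 * t\<bar> < q"
  using assms by linarith

lemma pos_mult: fixes d p :: int assumes "0 < d" "0 < p" shows "0 < d * p"
  using assms by simp

lemma rk_Lmut: "chi v e = 0 \<Longrightarrow> rk (Lmut e v) = rk v - 2 * (dt e v * rk e)"
  by (simp add: Lmut_def rk_lin chi_lower)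
lemma rk_Rmut: "chi e v = 0 \<Longrightarrow> rk (Rmut e v) = rk v - 2 * (dt v e * rk e)"
  by (simp add: Rmut_def rk_lin chi_lower)

lemma dec_pair:
  fixes x y z :: K0 and others :: "K0 list" and mk :: "K0 \<Rightarrow> K0 \<Rightarrow> K0 list"
  assumes gxy: "chi y x = 0" and px: "rk x > 0" and py: "rk y > 0" and dc: "dec (rk x) (rk y) (dt x y)"
    and rL: "rsum (mk (Lmut x y) x) = \<bar>rk (Lmut x y)\<bar> + rk x + S"
    and rR: "rsum (mk' y (Rmut y x)) = rk y + \<bar>rk (Rmut y x)\<bar> + S"
    and r0: "rsum es = rk x + rk y + S"
  shows "rsum (mk (Lmut x y) x) < rsum es \<or> rsum (mk' y (Rmut y x)) < rsum es"
proof -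
  have d0: "dt x y > 0" using dc by (simp add: dec_def)
  show ?thesis
  proof (cases "rk x \<le> rk y \<and> dt x y * rk x < rk y")
    case True
    have "rk (Lmut x y) = rk y - 2 * (dt x y * rk x)" using rk_Lmut[OF gxy] .
    moreover have "\<bar>rk y - 2 * (dt x y * rk x)\<bar> < rk y"
      using abs_lt[OF pos_mult[OF d0 px]] True by blast
    ultimately show ?thesis using rL r0 by linarith
  next
    case False
    then have h: "rk y \<le> rk x \<and> dt x y * rk y < rk x" using dc unfolding dec_def by blast
    have "chi x y = chi x y" ..
    have "rk (Rmut y x) = rk x - 2 * (dt x y * rk y)" using rk_Rmut[OF gxy] .
    moreover have "\<bar>rk x - 2 * (dt x y * rk y)\<bar> < rk x"
      using abs_lt[OF pos_mult[OF d0 py]] h by blast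
    ultimately show ?thesis using rR r0 by linarith
  qed
qed

lemma descent_step:
  assumes ex: "exc4 a b c d" and pos: "rk a > 0" "rk b > 0" "rk c > 0" "rk d > 0"
    and nb: "\<not> (rk a = 1 \<and> rk b = 1 \<and> rk c = 1 \<and> rk d = 1)"
  shows "\<exists>fs. mut_step\<^sup>*\<^sup>* [a,b,c,d] fs \<and> exceptional_basis fs \<and> rsum fs < rsum [a,b,c,d]"
proof -
  have g: "gram4 a b c d" using ex by (simp add: exc4_def)
  have exb: "exceptional_basis [a,b,c,d]" using ex exc_iff by blast
  note R = lat_rel[OF ex]
  have "dec (rk a) (rk b) (dt a b) \<or> dec (rk b) (rk c) (dt b c) \<or> dec (rk c) (rk d) (dt c d)
       \<or> dec (rk d) (rk a) (4 * rk a * rk d - dt a d)"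
    by (rule descent_arith) (use pos R nb in simp_all)
  then consider "dec (rk a) (rk b) (dt a b)" | "dec (rk b) (rk c) (dt b c)" | "dec (rk c) (rk d) (dt c d)"
    | "dec (rk d) (rk a) (4 * rk a * rk d - dt a d)" by blast
  then show ?thesis
  proof cases
    case 1
    have "rsum [Lmut a b, a, c, d] < rsum [a,b,c,d] \<or> rsum [b, Rmut b a, c, d] < rsum [a,b,c,d]"
      by (rule dec_pair[OF _ pos(1,2) 1, where S = "rk c + rk d"]) (use g pos in \<open>simp_all add: gram4_def rsum_def\<close>)
    moreover have "mut_step [a,b,c,d] [Lmut a b, a, c, d]" "mut_step [a,b,c,d] [b, Rmut b a, c, d]"
      by (simp_all add: step_explicit)
    ultimately show ?thesis using step_exc[OF exb] by blast
  next
    case 2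
    have "rsum [a, Lmut b c, b, d] < rsum [a,b,c,d] \<or> rsum [a, c, Rmut c b, d] < rsum [a,b,c,d]"
      by (rule dec_pair[OF _ pos(2,3) 2, where S = "rk a + rk d"]) (use g pos in \<open>simp_all add: gram4_def rsum_def\<close>)
    moreover have "mut_step [a,b,c,d] [a, Lmut b c, b, d]" "mut_step [a,b,c,d] [a, c, Rmut c b, d]"
      by (simp_all add: step_explicit)
    ultimately show ?thesis using step_exc[OF exb] by blast
  next
    case 3
    have "rsum [a, b, Lmut c d, c] < rsum [a,b,c,d] \<or> rsum [a, b, d, Rmut d c] < rsum [a,b,c,d]"
      by (rule dec_pair[OF _ pos(3,4) 3, where S = "rk a + rk b"]) (use g pos in \<open>simp_all add: gram4_def rsum_def\<close>)
    moreover have "mut_step [a,b,c,d] [a, b, Lmut c d, c]" "mut_step [a,b,c,d] [a, b, d, Rmut d c]"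
      by (simp_all add: step_explicit)
    ultimately show ?thesis using step_exc[OF exb] by blast
  next
    case 4
    let ?k = "kap d"
    have rot: "mut_step\<^sup>*\<^sup>* [a,b,c,d] [?k, a, b, c]" and ex2: "exc4 ?k a b c" using rotate[OF ex] by blast+
    have g2: "gram4 ?k a b c" using ex2 by (simp add: exc4_def)
    have exb2: "exceptional_basis [?k, a, b, c]" using ex2 exc_iff by blast
    have pk: "rk ?k > 0" using pos by (simp add: rk_kap)
    have dk: "dec (rk ?k) (rk a) (dt ?k a)" using 4 by (simp add: rk_kap dt_kap)
    have "rsum [Lmut ?k a, ?k, b, c] < rsum [a,b,c,d] \<or> rsum [a, Rmut a ?k, b, c] < rsum [a,b,c,d]"
      by (rule dec_pair[OF _ pk pos(1) dk, where S = "rk b + rk c"])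
        (use g2 pos in \<open>simp_all add: gram4_def rsum_def rk_kap\<close>)
    moreover have "mut_step [?k, a, b, c] [Lmut ?k a, ?k, b, c]" "mut_step [?k, a, b, c] [a, Rmut a ?k, b, c]"
      by (simp_all add: step_explicit)
    ultimately show ?thesis using step_exc[OF exb2] rot
      by (meson rtranclp.rtrancl_into_rtrancl)
  qed
qed


lemma rsum_nonneg: "rsum es \<ge> 0"
  unfolding rsum_def by (induction es) auto

lemma reach1:
  assumes "exceptional_basis es"
  shows "\<exists>a b c d. mut_step\<^sup>*\<^sup>* es [a,b,c,d] \<and> exc4 a b c d \<and> rk a = 1 \<and> rk b = 1 \<and> rk c = 1 \<and> rk d = 1"
  using assms
proof (induction "nat (rsum es)" arbitrary: es rule: less_induct)
  case less
  obtain a b c d where es: "es = [a,b,c,d]" and ex: "exc4 a b c d" using exc_4[OF less.prems] by blast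
  note nz = exc4_rk_nz[OF ex]
  let ?es' = "[sf a, sf b, sf c, sf d]"
  have st: "mut_step\<^sup>*\<^sup>* es ?es'" using sf_steps es by simp
  have exb': "exceptional_basis ?es'" using steps_exc[OF st less.prems] .
  then have ex': "exc4 (sf a) (sf b) (sf c) (sf d)" by (simp add: exc_iff)
  have rks: "rk (sf a) = \<bar>rk a\<bar>" "rk (sf b) = \<bar>rk b\<bar>" "rk (sf c) = \<bar>rk c\<bar>" "rk (sf d) = \<bar>rk d\<bar>"
    using rk_sf nz by auto
  have pos: "rk (sf a) > 0" "rk (sf b) > 0" "rk (sf c) > 0" "rk (sf d) > 0" using rks nz by auto
  have rs: "rsum ?es' = rsum es" using rks es by (simp add: rsum_def)
  show ?case
  proof (cases "rk (sf a) = 1 \<and> rk (sf b) = 1 \<and> rk (sf c) = 1 \<and> rk (sf d) = 1")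
    case True
    then show ?thesis using st ex' by blast
  next
    case False
    obtain fs where f1: "mut_step\<^sup>*\<^sup>* ?es' fs" and f2: "exceptional_basis fs" and f3: "rsum fs < rsum ?es'"
      using descent_step[OF ex' pos False] by blast
    have "nat (rsum fs) < nat (rsum es)" using f3 rs rsum_nonneg[of fs] by simp
    then obtain a' b' c' d' where "mut_step\<^sup>*\<^sup>* fs [a',b',c',d']" "exc4 a' b' c' d'"
        "rk a' = 1" "rk b' = 1" "rk c' = 1" "rk d' = 1"
      using less.hyps f2 by blast
    moreover have "mut_step\<^sup>*\<^sup>* es fs" using st f1 by (rule rtranclp_trans)
    ultimately show ?thesis by (meson rtranclp_trans)
  qed
qed

definition gramG :: "K0 \<Rightarrow> K0 \<Rightarrow> K0 \<Rightarrow> K0 \<Rightarrow> bool" where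
  "gramG a b c d \<longleftrightarrow> chi a b = 2 \<and> chi a c = 2 \<and> chi a d = 4 \<and> chi b c = 0 \<and> chi b d = 2 \<and> chi c d = 2"

lemma dt1: "rk x = 1 \<Longrightarrow> rk y = 1 \<Longrightarrow> dt x y = sl y - sl x"
  by (simp add: dt_def)

lemma sum13: assumes ex: "exc4 a b c d" and r: "rk a = 1" "rk b = 1" "rk c = 1" "rk d = 1"
  shows "dt a b + dt c d = 2"
proof -
  note R = lat_rel[OF ex]
  have "dt c d * dt c d = dt a b * dt a b + 4 - 4 * dt a b" using R(1) r by simp
  moreover have "dt a b * dt a b = dt c d * dt c d + 4 - 4 * dt c d" using R(3) r by simp
  ultimately show ?thesis by linarith
qed

lemma famA:
  "\<forall>a b c d. exc4 a b c d \<and> rk a = 1 \<and> rk b = 1 \<and> rk c = 1 \<and> rk d = 1 \<and> dt a b = 1 \<and> \<bar>dt b c\<bar> = int n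
    \<longrightarrow> (\<exists>a' b' c' d'. mut_step\<^sup>*\<^sup>* [a,b,c,d] [a',b',c',d'] \<and> exc4 a' b' c' d' \<and> gramG a' b' c' d')"
proof (induction n)
  case 0
  show ?case
  proof (intro allI impI, elim conjE)
    fix a b c d assume ex: "exc4 a b c d" and r: "rk a = 1" "rk b = 1" "rk c = 1" "rk d = 1"
      and d1: "dt a b = 1" and d2: "\<bar>dt b c\<bar> = int 0"
    have g: "gram4 a b c d" using ex by (simp add: exc4_def)
    have d3: "dt c d = 1" using sum13[OF ex r] d1 by simp
    have s: "sl b = sl a + 1" "sl c = sl b" "sl d = sl c + 1" using d1 d2 d3 r by (simp_all add: dt1)
    have "chi a b = 2 * dt a b" "chi a c = 2 * dt a c" "chi a d = 2 * dt a d" "chi b c = 2 * dt b c"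
      "chi b d = 2 * dt b d" "chi c d = 2 * dt c d" using g by (simp_all add: gram4_def chi_lower)
    then have "gramG a b c d" using s r by (simp add: gramG_def dt1)
    then show "\<exists>a' b' c' d'. mut_step\<^sup>*\<^sup>* [a,b,c,d] [a',b',c',d'] \<and> exc4 a' b' c' d' \<and> gramG a' b' c' d'"
      using ex by blast
  qed
next
  case (Suc n)
  show ?case
  proof (intro allI impI, elim conjE)
    fix a b c d assume ex: "exc4 a b c d" and r: "rk a = 1" "rk b = 1" "rk c = 1" "rk d = 1"
      and d1: "dt a b = 1" and d2: "\<bar>dt b c\<bar> = int (Suc n)"
    have g: "gram4 a b c d" using ex by (simp add: exc4_def)
    have exb: "exceptional_basis [a,b,c,d]" using ex exc_iff by blast
    have cab: "chi a b = 2" using g d1 by (simp add: gram4_def chi_lower)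
    show "\<exists>a' b' c' d'. mut_step\<^sup>*\<^sup>* [a,b,c,d] [a',b',c',d'] \<and> exc4 a' b' c' d' \<and> gramG a' b' c' d'"
    proof (cases "dt b c > 0")
      case True
      let ?x = "- Rmut b a"
      have p: "mut_step\<^sup>*\<^sup>* [a,b,c,d] [b, ?x, c, d]"
      proof -
        have "mut_step [a,b,c,d] [b, Rmut b a, c, d]" by (simp add: step_explicit)
        moreover have "mut_step [b, Rmut b a, c, d] [b, ?x, c, d]" by (simp add: step_explicit)
        ultimately show ?thesis by (meson rtranclp.rtrancl_into_rtrancl rtranclp.rtrancl_refl)
      qed
      have ex2: "exc4 b ?x c d" using steps_exc[OF p exb] by (simp add: exc_iff)
      have rx: "rk ?x = 1" using r cab by (simp add: Rmut_def rk_lin)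
      have sx: "sl ?x = 2 * sl b - sl a" using cab by (simp add: Rmut_def sl_lin)
      have "dt b ?x = 1" using r rx sx d1 by (simp add: dt1)
      moreover have "\<bar>dt ?x c\<bar> = int n" using r rx sx d1 d2 True by (simp add: dt1)
      ultimately obtain a' b' c' d' where "mut_step\<^sup>*\<^sup>* [b, ?x, c, d] [a',b',c',d']" "exc4 a' b' c' d'" "gramG a' b' c' d'"
        using Suc.IH ex2 r rx by blast
      then show ?thesis using p by (meson rtranclp_trans)
    next
      case False
      then have neg: "dt b c < 0" using d2 by auto
      let ?x = "- Lmut a b"
      have p: "mut_step\<^sup>*\<^sup>* [a,b,c,d] [?x, a, c, d]"
      proof -
        have "mut_step [a,b,c,d] [Lmut a b, a, c, d]" by (simp add: step_explicit)
        moreover have "mut_step [Lmut a b, a, c, d] [?x, a, c, d]" by (simp add: step_explicit)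
        ultimately show ?thesis by (meson rtranclp.rtrancl_into_rtrancl rtranclp.rtrancl_refl)
      qed
      have ex2: "exc4 ?x a c d" using steps_exc[OF p exb] by (simp add: exc_iff)
      have rx: "rk ?x = 1" using r cab by (simp add: Lmut_def rk_lin)
      have sx: "sl ?x = 2 * sl a - sl b" using cab by (simp add: Lmut_def sl_lin)
      have "dt ?x a = 1" using r rx sx d1 by (simp add: dt1)
      moreover have "\<bar>dt a c\<bar> = int n" using r rx sx d1 d2 neg by (simp add: dt1)
      ultimately obtain a' b' c' d' where "mut_step\<^sup>*\<^sup>* [?x, a, c, d] [a',b',c',d']" "exc4 a' b' c' d'" "gramG a' b' c' d'"
        using Suc.IH ex2 r rx by blast
      then show ?thesis using p by (meson rtranclp_trans)
    qed
  qed
qed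

lemma reachG:
  assumes "exceptional_basis es"
  shows "\<exists>a b c d. mut_step\<^sup>*\<^sup>* es [a,b,c,d] \<and> exc4 a b c d \<and> gramG a b c d"
proof -
  obtain a b c d where p: "mut_step\<^sup>*\<^sup>* es [a,b,c,d]" and ex: "exc4 a b c d"
    and r: "rk a = 1" "rk b = 1" "rk c = 1" "rk d = 1"
    using reach1[OF assms] by blast
  have "(dt a b - 1) * (dt b c - 1) = 0" using base_rel[OF ex r] .
  then consider "dt a b = 1" | "dt b c = 1" by auto
  then show ?thesis
  proof cases
    case 1
    then obtain a' b' c' d' where "mut_step\<^sup>*\<^sup>* [a,b,c,d] [a',b',c',d']" "exc4 a' b' c' d'" "gramG a' b' c' d'"
      using famA[of "nat \<bar>dt b c\<bar>"] ex r by force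
    then show ?thesis using p by (meson rtranclp_trans)
  next
    case 2
    have rot: "mut_step\<^sup>*\<^sup>* [a,b,c,d] [kap d, a, b, c]" and ex2: "exc4 (kap d) a b c" using rotate[OF ex] by blast+
    have rk: "rk (kap d) = 1" using r by (simp add: rk_kap)
    have d13: "dt a b + dt c d = 2" using sum13[OF ex r] .
    have "dt a d = dt a b + dt b c + dt c d" using r by (simp add: dt1)
    then have "dt (kap d) a = 1" using d13 2 r by (simp add: dt_kap)
    then obtain a' b' c' d' where "mut_step\<^sup>*\<^sup>* [kap d, a, b, c] [a',b',c',d']" "exc4 a' b' c' d'" "gramG a' b' c' d'"
      using famA[of "nat \<bar>dt a b\<bar>"] ex2 r rk by force
    then show ?thesis using p rot by (meson rtranclp_trans)
  qed
qed


fun lcT :: "int \<times> int \<times> int \<times> int \<Rightarrow> K0 \<Rightarrow> K0 \<Rightarrow> K0 \<Rightarrow> K0 \<Rightarrow> K0" where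
  "lcT (k0,k1,k2,k3) a b c d = lc4 k0 k1 k2 k3 a b c d"

lemma lcT_add: "lcT k a b c d + lcT m a b c d = lcT (case k of (k0,k1,k2,k3) \<Rightarrow> case m of (m0,m1,m2,m3) \<Rightarrow> (k0+m0,k1+m1,k2+m2,k3+m3)) a b c d"
  by (cases k; cases m) (simp add: lc4_def vsplit algebra_simps)

lemma lcT_uniq: assumes g: "gram4 a b c d" and e: "lcT k a b c d = lcT m a b c d" shows "k = m"
proof -
  obtain k0 k1 k2 k3 where k: "k = (k0,k1,k2,k3)" by (cases k) auto
  obtain m0 m1 m2 m3 where m: "m = (m0,m1,m2,m3)" by (cases m) auto
  have "lc4 (k0-m0) (k1-m1) (k2-m2) (k3-m3) a b c d = 0"
    using e unfolding k m by (simp add: lc4_def vsplit algebra_simps)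
  then have "k0 - m0 = 0 \<and> k1 - m1 = 0 \<and> k2 - m2 = 0 \<and> k3 - m3 = 0" using indep4[OF g] by blast
  then show ?thesis using k m by simp
qed

lemma lcT_ex: assumes "span4 a b c d" shows "\<exists>k. x = lcT k a b c d"
proof -
  obtain k0 k1 k2 k3 where "x = lc4 k0 k1 k2 k3 a b c d" using assms unfolding span4_def by blast
  then have "x = lcT (k0,k1,k2,k3) a b c d" by simp
  then show ?thesis by blast
qed

fun gpoly :: "int \<times> int \<times> int \<times> int \<Rightarrow> int \<times> int \<times> int \<times> int \<Rightarrow> int" where
  "gpoly (k0,k1,k2,k3) (m0,m1,m2,m3) =
     k0*m0 + 2*k0*m1 + 2*k0*m2 + 4*k0*m3 + k1*m1 + 2*k1*m3 + k2*m2 + 2*k2*m3 + k3*m3"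

lemma chi_lcT: assumes "gram4 a b c d" "gramG a b c d"
  shows "chi (lcT k a b c d) (lcT m a b c d) = gpoly k m"
  using assms by (cases k; cases m) (simp add: lc4_def chi_lin gram4_def gramG_def algebra_simps)

definition transfer :: "K0 \<Rightarrow> K0 \<Rightarrow> K0 \<Rightarrow> K0 \<Rightarrow> K0 \<Rightarrow> K0 \<Rightarrow> K0 \<Rightarrow> K0 \<Rightarrow> K0 \<Rightarrow> K0" where
  "transfer a b c d a' b' c' d' x = lcT (SOME k. x = lcT k a b c d) a' b' c' d'"

lemma transfer_lcT:
  assumes "exc4 a b c d"
  shows "transfer a b c d a' b' c' d' (lcT k a b c d) = lcT k a' b' c' d'"
proof -
  have g: "gram4 a b c d" using assms by (simp add: exc4_def)
  have "lcT k a b c d = lcT (SOME m. lcT k a b c d = lcT m a b c d) a b c d"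
    by (rule someI_ex) blast
  then have "(SOME m. lcT k a b c d = lcT m a b c d) = k" using lcT_uniq[OF g] by metis
  then show ?thesis by (simp add: transfer_def)
qed

lemma transfer_iso:
  assumes ex: "exc4 a b c d" "gramG a b c d" and ex': "exc4 a' b' c' d'" "gramG a' b' c' d'"
  shows "isometry (transfer a b c d a' b' c' d')"
    and "map (transfer a b c d a' b' c' d') [a,b,c,d] = [a',b',c',d']"
proof -
  let ?f = "transfer a b c d a' b' c' d'"
  have g: "gram4 a b c d" and s: "span4 a b c d" using ex by (simp_all add: exc4_def)
  have g': "gram4 a' b' c' d'" and s': "span4 a' b' c' d'" using ex' by (simp_all add: exc4_def)
  have add: "?f (x + y) = ?f x + ?f y" for x y
  proof -
    obtain k where k: "x = lcT k a b c d" using lcT_ex[OF s] by blast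
    obtain m where m: "y = lcT m a b c d" using lcT_ex[OF s] by blast
    show ?thesis unfolding k m lcT_add transfer_lcT[OF ex(1)] ..
  qed
  have ch: "chi (?f x) (?f y) = chi x y" for x y
  proof -
    obtain k where k: "x = lcT k a b c d" using lcT_ex[OF s] by blast
    obtain m where m: "y = lcT m a b c d" using lcT_ex[OF s] by blast
    show ?thesis unfolding k m transfer_lcT[OF ex(1)] chi_lcT[OF g ex(2)] chi_lcT[OF g' ex'(2)] ..
  qed
  have inj: "inj ?f"
  proof (rule injI)
    fix x y assume e: "?f x = ?f y"
    obtain k where k: "x = lcT k a b c d" using lcT_ex[OF s] by blast
    obtain m where m: "y = lcT m a b c d" using lcT_ex[OF s] by blast
    have "lcT k a' b' c' d' = lcT m a' b' c' d'" using e unfolding k m transfer_lcT[OF ex(1)] .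
    then have "k = m" using lcT_uniq[OF g'] by blast
    then show "x = y" using k m by simp
  qed
  have surj: "surj ?f"
  proof -
    have "z \<in> range ?f" for z
    proof -
      obtain m where m: "z = lcT m a' b' c' d'" using lcT_ex[OF s'] by blast
      then have "z = ?f (lcT m a b c d)" using transfer_lcT[OF ex(1)] by simp
      then show ?thesis by blast
    qed
    then show ?thesis by blast
  qed
  show "isometry ?f" unfolding isometry_def using add ch inj surj by (simp add: bij_def)
  have "a = lcT (1,0,0,0) a b c d" "b = lcT (0,1,0,0) a b c d" "c = lcT (0,0,1,0) a b c d" "d = lcT (0,0,0,1) a b c d"
    "a' = lcT (1,0,0,0) a' b' c' d'" "b' = lcT (0,1,0,0) a' b' c' d'" "c' = lcT (0,0,1,0) a' b' c' d'" "d' = lcT (0,0,0,1) a' b' c' d'"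
    by (simp_all add: lc4_def vsplit)
  then show "map ?f [a,b,c,d] = [a',b',c',d']" using transfer_lcT[OF ex(1)] by (metis list.simps(8,9))
qed

lemma radical:
  assumes sym: "\<And>v. chi q v = chi v q" and iso: "chi q q = 0"
  shows "\<exists>k. q = zsmult k pt"
proof -
  have "chi q (mk4 1 0 0 0) = chi (mk4 1 0 0 0) q" "chi q (mk4 (-1) 1 0 0) = chi (mk4 (-1) 1 0 0) q" using sym by blast+
  then have "2 * dt q (mk4 1 0 0 0) = 0" "2 * dt q (mk4 (-1) 1 0 0) = 0" using chi_antisym by (metis diff_self)+
  then have e: "sl q = 0" "rk q = 0" by (simp_all add: dt_def rk_def sl_def)
  have q0: "q$0 = q$3" "q$2 = - 2 * q$3 - q$1" using e by (simp_all add: rk_def sl_def)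
  have "chi q q = 2 * (q$3 + q$1) * (q$3 + q$1)" unfolding chi_def q0 by (simp add: algebra_simps)
  then have "q$1 = - q$3" using iso by simp linarith
  then have "q = zsmult (q$3) pt" using q0 by (simp add: vsplit)
  then show ?thesis by blast
qed

lemma iso_pt:
  assumes iso: "isometry \<phi>"
  shows "\<phi> pt = pt \<or> \<phi> pt = - pt"
proof -
  have ptsym: "chi pt v = chi v pt" for v by (simp add: chi_pt_left chi_pt_right)
  have ptiso: "chi pt pt = 0" by (simp add: chi_def)
  have sj: "surj \<phi>" using iso by (simp add: isometry_def bij_def)
  have "\<exists>k. \<phi> pt = zsmult k pt"
  proof (rule radical)
    fix v
    obtain u where u: "v = \<phi> u" using sj by (metis surj_def)
    show "chi (\<phi> pt) v = chi v (\<phi> pt)" unfolding u iso_chi[OF iso] by (rule ptsym)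
  next
    show "chi (\<phi> pt) (\<phi> pt) = 0" using iso_chi[OF iso] ptiso by simp
  qed
  then obtain k where k: "\<phi> pt = zsmult k pt" by blast
  obtain y where y: "pt = \<phi> y" using sj by (metis surj_def)
  have "\<exists>k'. y = zsmult k' pt"
  proof (rule radical)
    fix v
    have "chi y v = chi (\<phi> y) (\<phi> v)" using iso_chi[OF iso] by simp
    also have "\<dots> = chi (\<phi> v) (\<phi> y)" using y ptsym by simp
    also have "\<dots> = chi v y" using iso_chi[OF iso] by simp
    finally show "chi y v = chi v y" .
  next
    show "chi y y = 0" using iso_chi[OF iso, of y y] y ptiso by simp
  qed
  then obtain k' where k': "y = zsmult k' pt" by blast
  have "pt = zsmult k' (zsmult k pt)" using y k' k iso_zs[OF iso] by simp
  then have "pt $ 0 = k' * (k * pt $ 0)" by (metis zsmult_comp)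
  then have "k' * k = 1" by (simp add: algebra_simps)
  then have "k = 1 \<or> k = -1" by (simp add: zmult_eq_1_iff) blast
  then show ?thesis using k by (auto simp: vsplit)
qed

theorem mainTheorem5:
  fixes es fs :: "K0 list"
  assumes "exceptional_basis es" and "exceptional_basis fs"
  shows "\<exists>\<phi>. isometry \<phi> \<and> \<phi> pt = pt \<and> mut_step\<^sup>*\<^sup>* (map \<phi> es) fs"
proof -
  obtain a b c d where p1: "mut_step\<^sup>*\<^sup>* es [a,b,c,d]" and e1: "exc4 a b c d" "gramG a b c d"
    using reachG[OF assms(1)] by blast
  obtain a' b' c' d' where p2: "mut_step\<^sup>*\<^sup>* fs [a',b',c',d']" and e2: "exc4 a' b' c' d'" "gramG a' b' c' d'"
    using reachG[OF assms(2)] by blast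
  let ?f = "transfer a b c d a' b' c' d'"
  have iso: "isometry ?f" and mp: "map ?f [a,b,c,d] = [a',b',c',d']" using transfer_iso[OF e1 e2] by blast+
  have "mut_step\<^sup>*\<^sup>* (map ?f es) [a',b',c',d']" using map_steps[OF iso p1] mp by simp
  moreover have "mut_step\<^sup>*\<^sup>* [a',b',c',d'] fs" using steps_rev[OF p2 assms(2)] .
  ultimately have path: "mut_step\<^sup>*\<^sup>* (map ?f es) fs" by (rule rtranclp_trans)
  obtain f1 f2 f3 f4 where fs: "fs = [f1,f2,f3,f4]" using exc_4[OF assms(2)] by blast
  show ?thesis
  proof (cases "?f pt = pt")
    case True
    then show ?thesis using iso path by blast
  next
    case False
    then have fpt: "?f pt = - pt" using iso_pt[OF iso] by blast
    let ?g = "\<lambda>x. - ?f x"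
    have bu: "bij (uminus :: K0 \<Rightarrow> K0)" by (rule o_bij[of uminus]) (auto simp: fun_eq_iff)
    have "bij (uminus \<circ> ?f)" using iso bu unfolding isometry_def by (metis bij_comp)
    then have "bij ?g" by (simp add: comp_def)
    then have isog: "isometry ?g"
      using iso unfolding isometry_def by (auto simp: chi_lin)
    have "?g pt = pt" using fpt by simp
    moreover have "mut_step\<^sup>*\<^sup>* (map ?g es) fs"
    proof -
      have "map ?g es = map uminus (map ?f es)" by simp
      moreover have "mut_step\<^sup>*\<^sup>* (map uminus (map ?f es)) (map uminus fs)" using map_steps[OF iso_uminus path] .
      moreover have "mut_step\<^sup>*\<^sup>* (map uminus fs) fs" using negall_steps fs by simp
      ultimately show ?thesis by (metis rtranclp_trans)
    qed
    ultimately show ?thesis using isog by blast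
  qed
qed


end
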